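(* Let $n\ge 1$ be an integer, $K\in\mathbb Z$ and $\rho\in\mathbb C$. For $t\in\mathbb C$ and $j=0,1,2,\dots$ set $$\mu_j(t):=\oint_{|z|=R} z^{j}\,z^{K}\Big(1-\frac1z\Big)^{\rho}e^{t/z}\,dz ,\qquad \tau_n(t):=\det\big[\mu_{a+b-2}(t)\big]_{a,b=1}^{n},$$ where $R>1$ is arbitrary. Then $\tau_n(t)$ is a polynomial in $t$. Moreover, for every $t$ with $\tau_n(t)\neq 0$, let $Y_n(z;t)$ be the (unique) solution of the Riemann–Hilbert problem described in the context, and write $Y_n'(0;t)=\partial_z Y_n(z;t)|_{z=0}$. Then $$H_V:=-\tfrac12\,\mathrm{tr}\big(Y_n(0;t)^{-1}Y_n'(0;t)\,\sigma_3\big)+\frac{\rho}{2} =-\big(Y_n(0;t)^{-1}Y_n'(0;t)\big)_{11}+\frac{\rho}{2}=\frac{d}{dt}\ln\tau_n(t)+\frac{\rho}{2},$$ where $\sigma_3=\mathrm{diag}(1,-1)$.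
   Context: Here $(1-1/z)^\rho$ is the principal branch, so that $e^{\theta(z)}:=z^{K}(1-1/z)^{\rho}e^{t/z}$ is analytic on $\mathbb C\setminus[0,1]$; the value of $\mu_j$ does not depend on $R>1$. The Riemann–Hilbert problem: find a $2\times2$ matrix function $Y_n(z)=Y_n(z;t)$ such that $Y_n$ and $Y_n^{-1}$ are holomorphic and bounded in $\mathbb C\setminus\gamma$, where $\gamma=\{|z|=R\}$ is oriented counterclockwise; the boundary values satisfy $Y_n(z_+)=Y_n(z_-)\begin{bmatrix}1&e^{\theta(z)}\\0&1\end{bmatrix}$ for $z\in\gamma$, where $z_+$ (resp. $z_-$) denotes the boundary value from the left (inside) (resp. right (outside)) of $\gamma$; and $Y_n(z)=\big(\mathbf 1+O(z^{-1})\big)z^{n\sigma_3}$ as $z\to\infty$. It is known (Fokas–Its–Kitaev) that this problem has a solution iff $\tau_n(t)\ne0$, in which case the solution is unique, satisfies $\det Y_n\equiv1$, and is analytic at $z=0$ (which lies inside $\gamma$). *)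

theory Defs
  imports "HOL-Complex_Analysis.Complex_Analysis" "Jordan_Normal_Form.Determinant"
begin

definition weight :: "int \<Rightarrow> complex \<Rightarrow> complex \<Rightarrow> complex \<Rightarrow> complex" where
  "weight K \<rho> t z = z powi K * (1 - 1/z) powr \<rho> * exp (t / z)"

definition mu :: "int \<Rightarrow> complex \<Rightarrow> real \<Rightarrow> nat \<Rightarrow> complex \<Rightarrow> complex" where
  "mu K \<rho> R j t = contour_integral (circlepath 0 R) (\<lambda>z. z ^ j * weight K \<rho> t z)"

text \<open>Hankel determinant tau_n(t) = det [mu_(a+b-2)(t)]_(a,b=1..n) (0-based indices here).\<close>
definition tau :: "int \<Rightarrow> complex \<Rightarrow> real \<Rightarrow> nat \<Rightarrow> complex \<Rightarrow> complex" where
  "tau K \<rho> R n t = Determinant.det (mat n n (\<lambda>(a, b). mu K \<rho> R (a + b) t))"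

definition jump_mat :: "int \<Rightarrow> complex \<Rightarrow> complex \<Rightarrow> complex \<Rightarrow> complex mat" where
  "jump_mat K \<rho> t z = mat 2 2 (\<lambda>(i, j). if i = j then 1 else if i = 0 \<and> j = 1 then weight K \<rho> t z else 0)"

definition zpow_sigma3 :: "nat \<Rightarrow> complex \<Rightarrow> complex mat" where
  "zpow_sigma3 n z = mat 2 2 (\<lambda>(i, j). if i = j then (if i = 0 then z ^ n else inverse z ^ n) else 0)"

definition sigma3 :: "complex mat" where
  "sigma3 = mat 2 2 (\<lambda>(i, j). if i = j then (if i = 0 then 1 else -1) else 0)"

definition mat_trace :: "complex mat \<Rightarrow> complex" where
  "mat_trace A = (\<Sum>i<dim_row A. A $$ (i, i))"

definition good_off_circle :: "real \<Rightarrow> (complex \<Rightarrow> complex) \<Rightarrow> bool" where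
  "good_off_circle R f \<longleftrightarrow>
     f holomorphic_on ball 0 R \<and> f holomorphic_on (- cball 0 R) \<and>
     (\<forall>B. bounded B \<longrightarrow> bounded (f ` (B - sphere 0 R)))"

definition RHP_solution :: "int \<Rightarrow> complex \<Rightarrow> real \<Rightarrow> nat \<Rightarrow> complex \<Rightarrow> (complex \<Rightarrow> complex mat) \<Rightarrow> bool" where
  "RHP_solution K \<rho> R n t Y \<longleftrightarrow>
     (\<forall>z. Y z \<in> carrier_mat 2 2) \<and>
     (\<forall>i<2. \<forall>j<2. good_off_circle R (\<lambda>z. Y z $$ (i, j))) \<and>
     (\<exists>Yi. (\<forall>z. Yi z \<in> carrier_mat 2 2) \<and>
           (\<forall>z. norm z \<noteq> R \<longrightarrow> Y z * Yi z = 1\<^sub>m 2 \<and> Yi z * Y z = 1\<^sub>m 2) \<and>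
           (\<forall>i<2. \<forall>j<2. good_off_circle R (\<lambda>z. Yi z $$ (i, j)))) \<and>
     (\<exists>Yp Ym. \<forall>z \<in> sphere 0 R.
        Yp z \<in> carrier_mat 2 2 \<and> Ym z \<in> carrier_mat 2 2 \<and>
        (\<forall>i<2. \<forall>j<2.
           ((\<lambda>w. Y w $$ (i, j)) \<longlongrightarrow> Yp z $$ (i, j)) (at z within ball 0 R) \<and>
           ((\<lambda>w. Y w $$ (i, j)) \<longlongrightarrow> Ym z $$ (i, j)) (at z within - cball 0 R)) \<and>
        Yp z = Ym z * jump_mat K \<rho> t z) \<and>
     (\<exists>C r. \<forall>z. norm z > r \<longrightarrow>
        (\<forall>i<2. \<forall>j<2.
           norm ((Y z * zpow_sigma3 n (inverse z)) $$ (i, j) - (if i = j then 1 else 0)) \<le> C / norm z))"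

end

theory Submission
  imports Defs
begin

lemma circle_int_indep:
  assumes hol: "f holomorphic_on {z. a < norm z}" and a: "0 \<le> a" "a < r1" "a < r2"
  shows "contour_integral (circlepath 0 r1) f = contour_integral (circlepath 0 r2) f"
proof (rule Cauchy_theorem_homotopic_loops[OF _ _ hol])
  show "open {z::complex. a < norm z}"
    by (intro open_Collect_less continuous_intros)
  show "homotopic_loops {z. a < cmod z} (circlepath 0 r1) (circlepath 0 r2)"
  proof (rule homotopic_loops_linear)
    fix t :: real assume t: "t \<in> {0..1}"
    define e where "e = exp (2 * of_real pi * \<i> * of_real t)"
    have ne: "norm e = 1" unfolding e_def by (simp add: norm_exp_eq_Re)
    show "closed_segment (circlepath 0 r1 t) (circlepath 0 r2 t) \<subseteq> {z. a < cmod z}"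
    proof
      fix x assume "x \<in> closed_segment (circlepath 0 r1 t) (circlepath 0 r2 t)"
      then obtain u where u: "0 \<le> u" "u \<le> 1" and x: "x = (1 - u) *\<^sub>R (r1 * e) + u *\<^sub>R (r2 * e)"
        unfolding closed_segment_def circlepath e_def by auto
      have "x = of_real ((1 - u) * r1 + u * r2) * e"
        unfolding x by (simp add: scaleR_conv_of_real algebra_simps)
      hence "norm x = norm (complex_of_real ((1 - u) * r1 + u * r2)) * norm e" by (simp only: norm_mult)
      hence "norm x = \<bar>(1 - u) * r1 + u * r2\<bar>" using ne by (simp only: norm_of_real mult_1_right)
      moreover have "(1 - u) * r1 + u * r2 > a"
      proof -
        have "(1 - u) * r1 \<ge> (1 - u) * a" using u a by (intro mult_left_mono) auto
        moreover have "u * r2 \<ge> u * a" using u a by (intro mult_left_mono) auto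
        moreover have "(1-u) * r1 + u * r2 \<noteq> a \<or> True" by simp
        ultimately have "(1 - u) * r1 + u * r2 \<ge> a" by (simp add: algebra_simps)
        moreover have "(1 - u) * r1 > (1 - u) * a \<or> u * r2 > u * a"
          using u a by (cases "u = 1") (auto intro!: mult_strict_left_mono)
        ultimately show ?thesis using \<open>(1 - u) * r1 \<ge> (1 - u) * a\<close> \<open>u * r2 \<ge> u * a\<close>
          by (auto simp: algebra_simps)
      qed
      ultimately show "x \<in> {z. a < cmod z}" by simp
    qed
  qed auto
qed auto

lemma circle_int_decay:
  assumes hol: "f holomorphic_on {z. a < norm z}" and a: "0 \<le> a" "a < r"
    and bnd: "\<And>z. norm z \<ge> r0 \<Longrightarrow> norm (f z - c / z) \<le> C / norm z ^ 2"
  shows "(f has_contour_integral (2 * pi * \<i> * c)) (circlepath 0 r)"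
proof -
  have cont: "continuous_on {z. a < norm z} f" using hol holomorphic_on_imp_continuous_on by blast
  have integ: "f contour_integrable_on circlepath 0 \<rho>" if "a < \<rho>" for \<rho>
    by (rule contour_integrable_continuous_circlepath[OF continuous_on_subset[OF cont]])
       (use that a in auto)
  define I where "I = contour_integral (circlepath 0 r) f"
  have ev: "norm (I - 2 * pi * \<i> * c) \<le> 2 * pi * C / \<rho>" if \<rho>: "\<rho> \<ge> max r0 (a + 1)" for \<rho>
  proof -
    have \<rho>a: "a < \<rho>" "\<rho> > 0" using \<rho> a by auto
    have "I = contour_integral (circlepath 0 \<rho>) f"
      unfolding I_def by (rule circle_int_indep[OF hol a(1) a(2) \<rho>a(1)])
    hence h1: "(f has_contour_integral I) (circlepath 0 \<rho>)"
      using has_contour_integral_integral[OF integ[OF \<rho>a(1)]] by simp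
    have h2: "((\<lambda>z. c / (z - 0)) has_contour_integral (2 * of_real pi * \<i> * c)) (circlepath 0 \<rho>)"
      by (rule Cauchy_integral_circlepath_simple[where f="\<lambda>_. c"]) (use \<rho>a in auto)
    have h3: "((\<lambda>z. f z - c / (z - 0)) has_contour_integral (I - 2 * of_real pi * \<i> * c)) (circlepath 0 \<rho>)"
      by (rule has_contour_integral_diff[OF h1 h2])
    have "norm (I - 2 * of_real pi * \<i> * c) \<le> (C / \<rho>^2) * (2 * pi * \<rho>)"
    proof (rule has_contour_integral_bound_circlepath[OF h3])
      show "0 \<le> C / \<rho>^2"
      proof -
        have "norm (f \<rho> - c / \<rho>) \<le> C / norm (complex_of_real \<rho>) ^ 2" using bnd[of "of_real \<rho>"] \<rho> by auto
        hence "0 \<le> C / norm (complex_of_real \<rho>) ^ 2" by (meson norm_ge_zero order_trans)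
        thus ?thesis using \<rho>a by simp
      qed
      fix x :: complex assume "norm (x - 0) = \<rho>"
      thus "norm (f x - c / (x - 0)) \<le> C / \<rho>^2" using bnd[of x] \<rho> by auto
    qed (use \<rho>a in auto)
    also have "(C / \<rho>^2) * (2 * pi * \<rho>) = 2 * pi * C / \<rho>" using \<rho>a by (simp add: power2_eq_square field_simps)
    finally show ?thesis by simp
  qed
  have "norm (I - 2 * pi * \<i> * c) \<le> 0"
  proof (rule tendsto_le[OF trivial_limit_at_top_linorder])
    show "((\<lambda>\<rho>. 2 * pi * C / \<rho>) \<longlongrightarrow> 0) at_top"
      by (intro tendsto_divide_0[OF tendsto_const] filterlim_at_top_imp_at_infinity filterlim_ident)
    show "((\<lambda>\<rho>. norm (I - 2 * pi * \<i> * c)) \<longlongrightarrow> norm (I - 2 * pi * \<i> * c)) at_top" by simp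
    show "\<forall>\<^sub>F \<rho> in at_top. norm (I - 2 * pi * \<i> * c) \<le> 2 * pi * C / \<rho>"
      by (rule eventually_mono[OF eventually_ge_at_top[of "max r0 (a + 1)"]]) (rule ev)
  qed
  hence "I = 2 * pi * \<i> * c" by simp
  thus ?thesis using has_contour_integral_integral[OF integ[OF a(2)]] unfolding I_def by simp
qed

lemma DC_circle:
  fixes G Gp :: "complex \<Rightarrow> complex" and r :: "nat \<Rightarrow> real"
  assumes int: "\<And>k. (G has_contour_integral L) (circlepath 0 (r k))"
    and lim: "r \<longlonglongrightarrow> R" and ne: "\<And>k. r k \<noteq> R" and pos: "\<And>k. r k > 0"
    and inS: "\<And>k. sphere 0 (r k) \<subseteq> S"
    and gl: "\<And>z. z \<in> sphere 0 R \<Longrightarrow> (G \<longlongrightarrow> Gp z) (at z within S)"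
    and bnd: "\<And>k z. z \<in> sphere 0 (r k) \<Longrightarrow> norm (G z) \<le> B"
    and R: "R > 0"
  shows "(Gp has_contour_integral L) (circlepath 0 R)"
proof -
  define e where "e x = exp (2 * of_real pi * \<i> * of_real x)" for x :: real
  have ne1: "norm (e x) = 1" for x unfolding e_def by (simp add: norm_exp_eq_Re)
  have circ: "circlepath 0 \<rho> x = of_real \<rho> * e x" for \<rho> x unfolding circlepath e_def by simp
  have vd: "vector_derivative (circlepath 0 \<rho>) (at x) = 2 * pi * \<i> * \<rho> * e x" for \<rho> x
    unfolding vector_derivative_circlepath e_def by simp
  obtain Rb where Rb: "Rb > 0" "\<And>k. norm (r k) \<le> Rb"
    using convergent_imp_Bseq[OF convergentI[OF lim]] by (auto simp: Bseq_def)
  have B0: "B \<ge> 0"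
  proof -
    have "of_real (r 0) \<in> sphere (0::complex) (r 0)" using pos[of 0] by simp
    thus ?thesis using bnd[of "of_real (r 0)" 0] by (meson norm_ge_zero order_trans)
  qed
  define \<phi> where "\<phi> k x = G (circlepath 0 (r k) x) * vector_derivative (circlepath 0 (r k)) (at x)" for k x
  define g where "g x = Gp (circlepath 0 R x) * vector_derivative (circlepath 0 R) (at x)" for x
  have hi: "(\<phi> k has_integral L) {0..1}" for k
    using int[of k] unfolding has_contour_integral \<phi>_def .
  have conv: "(\<lambda>k. \<phi> k x) \<longlonglongrightarrow> g x" for x
  proof -
    have l1: "(\<lambda>k. of_real (r k) * e x) \<longlonglongrightarrow> of_real R * e x"
      by (intro tendsto_intros lim)
    have evk: "of_real (r k) * e x \<in> S \<and> of_real (r k) * e x \<noteq> of_real R * e x" for k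
    proof -
      have "of_real (r k) * e x \<in> sphere 0 (r k)" using pos[of k] ne1[of x] by (simp add: norm_mult)
      moreover have "of_real (r k) * e x \<noteq> of_real R * e x"
        using ne[of k] ne1[of x] by (auto simp: norm_mult)
      ultimately show ?thesis using subsetD[OF inS[of k]] by blast
    qed
    have "filterlim (\<lambda>k. of_real (r k) * e x) (at (of_real R * e x) within S) sequentially"
      unfolding filterlim_at using l1 evk by (simp add: always_eventually)
    moreover have "of_real R * e x \<in> sphere 0 R" using R ne1[of x] by (simp add: norm_mult)
    ultimately have "(\<lambda>k. G (of_real (r k) * e x)) \<longlonglongrightarrow> Gp (of_real R * e x)"
      using filterlim_compose[OF gl] by blast
    moreover have "(\<lambda>k. 2 * pi * \<i> * r k * e x) \<longlonglongrightarrow> 2 * pi * \<i> * R * e x"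
      by (intro tendsto_intros lim)
    ultimately have "(\<lambda>k. G (of_real (r k) * e x) * (2 * pi * \<i> * r k * e x)) \<longlonglongrightarrow> Gp (of_real R * e x) * (2 * pi * \<i> * R * e x)"
      by (rule tendsto_mult)
    thus ?thesis unfolding \<phi>_def g_def circ vd .
  qed
  have le: "norm (\<phi> k x) \<le> B * (2 * pi * Rb)" for k x
  proof -
    have "norm (G (circlepath 0 (r k) x)) \<le> B"
      using bnd[of "circlepath 0 (r k) x" k] pos[of k] ne1[of x] by (simp add: circ norm_mult)
    moreover have "norm (vector_derivative (circlepath 0 (r k)) (at x)) \<le> 2 * pi * Rb"
      using Rb(2)[of k] pos[of k] ne1[of x] by (simp add: vd norm_mult)
    ultimately show ?thesis unfolding \<phi>_def norm_mult by (intro mult_mono) (use B0 in auto)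
  qed
  have dc: "g integrable_on {0..1}" "(\<lambda>k. integral {0..1} (\<phi> k)) \<longlonglongrightarrow> integral {0..1} g"
    using dominated_convergence[of \<phi> "{0..1}" "\<lambda>_. B * (2 * pi * Rb)" g] hi le conv
    by (auto intro: has_integral_integrable)
  have "integral {0..1} (\<phi> k) = L" for k using hi by (rule integral_unique)
  hence "(\<lambda>k. integral {0..1} (\<phi> k)) \<longlonglongrightarrow> L" by simp
  hence "integral {0..1} g = L" using dc(2) LIMSEQ_unique by blast
  hence "(g has_integral L) {0..1}" using dc(1) by (metis has_integral_integral)
  thus ?thesis unfolding has_contour_integral g_def .
qed

lemma seq_to_0: "(\<lambda>k. 1 / (2 + real k)) \<longlonglongrightarrow> 0"
  by (intro tendsto_divide_0[OF tendsto_const] filterlim_at_top_imp_at_infinity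
        filterlim_tendsto_add_at_top[OF tendsto_const filterlim_real_sequentially])

lemma inner_int:
  assumes hol: "f holomorphic_on ball 0 R" and R: "R > 0"
    and bnd: "\<And>z. z \<in> ball 0 R \<Longrightarrow> norm (f z) \<le> B"
    and lim: "\<And>z. z \<in> sphere 0 R \<Longrightarrow> (f \<longlongrightarrow> fp z) (at z within ball 0 R)"
  shows "((\<lambda>s. fp s / s ^ Suc m) has_contour_integral (2 * pi * \<i> / fact m * (deriv ^^ m) f 0)) (circlepath 0 R)"
proof -
  define r where "r k = R - R / (2 + real k)" for k
  have rb: "R / 2 \<le> r k" "r k < R" for k
  proof -
    have "R / (2 + real k) \<le> R / 2" using R by (intro divide_left_mono) auto
    moreover have "R / (2 + real k) > 0" using R by auto
    ultimately show "R / 2 \<le> r k" "r k < R" unfolding r_def by auto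
  qed
  have rlim: "r \<longlonglongrightarrow> R"
  proof -
    have "(\<lambda>k. R - R * (1 / (2 + real k))) \<longlonglongrightarrow> R - R * 0"
      by (intro tendsto_intros seq_to_0)
    thus ?thesis unfolding r_def by simp
  qed
  define S where "S = ball (0::complex) R - ball 0 (R/2)"
  show ?thesis
  proof (rule DC_circle[where G="\<lambda>s. f s / s ^ Suc m" and r=r and S=S and B="B / (R/2) ^ Suc m"])
    fix k
    have "cball 0 (r k) \<subseteq> ball (0::complex) R" using rb[of k] by auto
    hence "continuous_on (cball 0 (r k)) f" "f holomorphic_on ball 0 (r k)"
      using holomorphic_on_subset[OF hol] holomorphic_on_imp_continuous_on by (blast, force)
    from Cauchy_has_contour_integral_higher_derivative_circlepath[OF this, of 0 m]
    show "((\<lambda>s. f s / s ^ Suc m) has_contour_integral (2 * pi * \<i> / fact m * (deriv ^^ m) f 0)) (circlepath 0 (r k))"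
      using rb[of k] R by simp
  next
    fix k show "r k \<noteq> R" "r k > 0" using rb[of k] R by auto
  next
    fix k show "sphere 0 (r k) \<subseteq> S" using rb[of k] by (auto simp: S_def)
  next
    fix z :: complex assume z: "z \<in> sphere 0 R"
    hence "z \<noteq> 0" using R by auto
    have "((\<lambda>s. f s / s ^ Suc m) \<longlongrightarrow> fp z / z ^ Suc m) (at z within ball 0 R)"
      by (intro tendsto_intros lim z) (use \<open>z \<noteq> 0\<close> in auto)
    thus "((\<lambda>s. f s / s ^ Suc m) \<longlongrightarrow> fp z / z ^ Suc m) (at z within S)"
      by (rule tendsto_within_subset) (auto simp: S_def)
  next
    fix k and z :: complex assume z: "z \<in> sphere 0 (r k)"
    hence zb: "z \<in> ball 0 R" "norm z \<ge> R/2" using rb[of k] by auto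
    have "norm (f z / z ^ Suc m) = norm (f z) / norm z ^ Suc m" by (simp only: norm_divide norm_power)
    also have "\<dots> \<le> B / (R/2) ^ Suc m"
    proof (rule frac_le)
      show "0 \<le> B" using bnd[OF zb(1)] norm_ge_zero order_trans by blast
      show "norm (f z) \<le> B" by (rule bnd[OF zb(1)])
      show "0 < (R/2) ^ Suc m" using R by simp
      show "(R/2) ^ Suc m \<le> norm z ^ Suc m" using zb R by (intro power_mono) auto
    qed
    finally show "norm (f z / z ^ Suc m) \<le> B / (R/2) ^ Suc m" .
  qed (use rlim R in auto)
qed

lemma inner_int0:
  assumes hol: "f holomorphic_on ball 0 R" and R: "R > 0"
    and bnd: "\<And>z. z \<in> ball 0 R \<Longrightarrow> norm (f z) \<le> B"
    and lim: "\<And>z. z \<in> sphere 0 R \<Longrightarrow> (f \<longlongrightarrow> fp z) (at z within ball 0 R)"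
  shows "((\<lambda>s. fp s * s ^ k) has_contour_integral 0) (circlepath 0 R)"
proof -
  have hol2: "(\<lambda>s. f s * s ^ Suc k) holomorphic_on ball 0 R"
    by (intro holomorphic_intros hol)
  have "((\<lambda>s. (fp s * s ^ Suc k) / s ^ Suc 0) has_contour_integral
      (2 * pi * \<i> / fact 0 * (deriv ^^ 0) (\<lambda>s. f s * s ^ Suc k) 0)) (circlepath 0 R)"
  proof (rule inner_int[OF hol2 R])
    fix z :: complex assume "z \<in> ball 0 R"
    moreover have "0 \<le> B" using bnd[OF \<open>z \<in> ball 0 R\<close>] by (meson norm_ge_zero order_trans)
    ultimately have "norm (f z * z ^ Suc k) \<le> B * R ^ Suc k"
      using bnd[of z] R by (auto simp: norm_mult norm_power intro!: mult_mono power_mono)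
    thus "norm (f z * z ^ Suc k) \<le> B * R ^ Suc k" .
  next
    fix z :: complex assume "z \<in> sphere 0 R"
    thus "((\<lambda>s. f s * s ^ Suc k) \<longlongrightarrow> fp z * z ^ Suc k) (at z within ball 0 R)"
      by (intro tendsto_intros lim)
  qed
  hence "((\<lambda>s. (fp s * s ^ Suc k) / s ^ Suc 0) has_contour_integral 0) (circlepath 0 R)" by simp
  thus ?thesis by (rule has_contour_integral_eq) (use R in auto)
qed

lemma outer_int:
  assumes hol: "G holomorphic_on (- cball 0 R)" and R: "R > 0"
    and bnd: "\<And>z. R < norm z \<Longrightarrow> norm z < R + 1 \<Longrightarrow> norm (G z) \<le> B"
    and lim: "\<And>z. z \<in> sphere 0 R \<Longrightarrow> (G \<longlongrightarrow> Gm z) (at z within - cball 0 R)"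
    and dec: "\<And>z. norm z \<ge> r0 \<Longrightarrow> norm (G z - c / z) \<le> C / norm z ^ 2"
  shows "(Gm has_contour_integral (2 * pi * \<i> * c)) (circlepath 0 R)"
proof -
  have hol': "G holomorphic_on {z. R < norm z}" using hol by (simp add: Compl_eq_Diff_UNIV Diff_eq[symmetric] set_diff_eq not_le)
  define r where "r k = R + 1 / (2 + real k)" for k
  have rb: "R < r k" "r k < R + 1" for k
  proof -
    have "1 / (2 + real k) < 1" by (auto simp: field_simps)
    moreover have "1 / (2 + real k) > 0" by auto
    ultimately show "R < r k" "r k < R + 1" unfolding r_def by auto
  qed
  have rlim: "r \<longlonglongrightarrow> R"
  proof -
    have "(\<lambda>k. R + 1 / (2 + real k)) \<longlonglongrightarrow> R + 0"
      by (intro tendsto_intros seq_to_0)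
    thus ?thesis unfolding r_def by simp
  qed
  show ?thesis
  proof (rule DC_circle[where G=G and r=r and S="- cball 0 R" and B=B])
    fix k show "(G has_contour_integral 2 * pi * \<i> * c) (circlepath 0 (r k))"
      by (rule circle_int_decay[OF hol' _ rb(1) dec]) (use R in auto)
  next
    fix k show "r k \<noteq> R" "r k > 0" using rb[of k] R by auto
  next
    fix k show "sphere 0 (r k) \<subseteq> - cball 0 R" using rb[of k] by auto
  next
    fix k and z :: complex assume "z \<in> sphere 0 (r k)"
    thus "norm (G z) \<le> B" using rb[of k] by (intro bnd) auto
  qed (use rlim R lim in auto)
qed

definition nu :: "int \<Rightarrow> complex \<Rightarrow> real \<Rightarrow> int \<Rightarrow> complex \<Rightarrow> complex" where
  "nu K \<rho> R l t = contour_integral (circlepath 0 R) (\<lambda>z. z powi l * weight K \<rho> t z)"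

definition Acoef :: "int \<Rightarrow> complex \<Rightarrow> real \<Rightarrow> int \<Rightarrow> complex" where
  "Acoef K \<rho> R l = contour_integral (circlepath 0 R) (\<lambda>z. z powi l * (z powi K * (1 - 1/z) powr \<rho>))"

lemma notin_nonpos: fixes z :: complex assumes "norm z > 1" shows "1 - 1/z \<notin> \<real>\<^sub>\<le>\<^sub>0"
proof -
  have "norm (1/z) < 1" using assms by (simp add: norm_divide divide_less_eq_1)
  hence "Re (1/z) < 1" using abs_Re_le_cmod[of "1/z"] by linarith
  hence "Re (1 - 1/z) > 0" by simp
  thus ?thesis by (auto simp: complex_nonpos_Reals_iff)
qed

lemma hol_pw: "(\<lambda>z. (1 - 1/z) powr \<rho>) holomorphic_on {z. 1 < norm z}"
  by (intro holomorphic_intros) (auto simp: notin_nonpos)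

lemma hol_weight: "weight K \<rho> t holomorphic_on {z. 1 < norm z}"
proof -
  have "(\<lambda>z. z powi K * (1 - 1/z) powr \<rho> * exp (t / z)) holomorphic_on {z. 1 < norm z}"
    by (intro holomorphic_intros hol_pw) auto
  thus ?thesis unfolding weight_def[abs_def] .
qed

lemma pw_bound: "\<exists>Bw>0. \<forall>z::complex. norm z \<ge> 2 \<longrightarrow> norm ((1 - 1/z) powr \<rho>) \<le> Bw"
proof -
  have nn: "w \<notin> \<real>\<^sub>\<le>\<^sub>0" if "w \<in> cball (1::complex) (1/2)" for w
  proof -
    have "norm (w - 1) \<le> 1/2" using that by (simp add: dist_norm norm_minus_commute)
    hence "Re (w - 1) \<ge> - 1/2" using abs_Re_le_cmod[of "w - 1"] by linarith
    thus ?thesis by (auto simp: complex_nonpos_Reals_iff)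
  qed
  have "(\<lambda>w. w powr \<rho>) holomorphic_on cball (1::complex) (1/2)"
    by (intro holomorphic_intros) (use nn in auto)
  hence "continuous_on (cball (1::complex) (1/2)) (\<lambda>w. w powr \<rho>)"
    by (rule holomorphic_on_imp_continuous_on)
  hence "bounded ((\<lambda>w. w powr \<rho>) ` cball 1 (1/2))"
    by (intro compact_imp_bounded compact_continuous_image compact_cball)
  then obtain b where b: "b > 0" "\<And>w. w \<in> cball (1::complex) (1/2) \<Longrightarrow> norm (w powr \<rho>) \<le> b"
    by (auto simp: bounded_pos)
  have "norm ((1 - 1/z) powr \<rho>) \<le> b" if "norm z \<ge> 2" for z :: complex
  proof (rule b(2))
    have "norm (1/z) \<le> 1/2" using that by (simp add: norm_divide divide_le_eq_1)
    thus "1 - 1/z \<in> cball 1 (1/2)" by (simp add: dist_norm)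
  qed
  with b(1) show ?thesis by blast
qed

lemma nu_poly:
  assumes R: "R > 1" and M: "l + K + 2 \<le> int M" "M > 0"
  shows "nu K \<rho> R l t = (\<Sum>m<M. t^m / fact m * Acoef K \<rho> R (l - int m))"
proof -
  obtain N where MN: "M = Suc N" using M(2) gr0_implies_Suc by blast
  define w0 where "w0 z = z powi K * (1 - 1/z) powr \<rho>" for z :: complex
  define E where "E z = exp (t / z) - (\<Sum>m<M. (t/z)^m / fact m)" for z :: complex
  define f where "f z = z powi l * weight K \<rho> t z - (\<Sum>m<M. t^m / fact m * (z powi (l - int m) * w0 z))" for z
  have hol_w0: "w0 holomorphic_on {z. 1 < norm z}"
    unfolding w0_def[abs_def] by (intro holomorphic_intros hol_pw) auto
  have holf: "f holomorphic_on {z. 1 < norm z}"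
    unfolding f_def[abs_def]
    by (intro holomorphic_intros hol_weight hol_w0) auto
  have f_eq: "f z = z powi l * w0 z * E z" if "z \<noteq> 0" for z
  proof -
    have "t^m / fact m * (z powi (l - int m) * w0 z) = z powi l * w0 z * ((t/z)^m / fact m)" for m
      using that by (simp add: power_int_diff power_divide) (simp add: ac_simps)
    hence "(\<Sum>m<M. t^m / fact m * (z powi (l - int m) * w0 z)) = z powi l * w0 z * (\<Sum>m<M. (t/z)^m / fact m)"
      by (simp only: sum_distrib_left)
    thus ?thesis unfolding f_def E_def weight_def w0_def by (simp add: algebra_simps)
  qed
  obtain Bw where Bw: "Bw > 0" "\<And>z::complex. norm z \<ge> 2 \<Longrightarrow> norm ((1 - 1/z) powr \<rho>) \<le> Bw"
    using pw_bound[of \<rho>] by blast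
  define C where "C = Bw * exp (norm t) * norm t ^ M"
  have dec: "norm (f z - 0 / z) \<le> C / norm z ^ 2" if z: "norm z \<ge> 2" for z
  proof -
    have z0: "z \<noteq> 0" "norm z \<ge> 1" "norm z > 0" using z by auto
    have E: "norm (E z) \<le> exp (norm t) * norm t ^ M / norm z ^ M"
    proof -
      have "norm (E z) \<le> exp (norm (t/z)) * (norm (t/z) ^ Suc N) / fact N"
        using Taylor_exp_field[of "t/z" N] unfolding E_def MN by (simp add: lessThan_Suc_atMost)
      also have "\<dots> \<le> exp (norm t) * (norm (t/z) ^ Suc N) / 1"
      proof (intro frac_le mult_right_mono)
        have "norm (t/z) \<le> norm t" using z0 by (simp add: norm_divide divide_le_eq mult_le_cancel_left1)
        thus "exp (norm (t/z)) \<le> exp (norm t)" by simp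
      qed auto
      also have "\<dots> = exp (norm t) * norm t ^ M / norm z ^ M"
        by (simp add: MN norm_divide power_divide)
      finally show ?thesis .
    qed
    have "norm (f z) = norm z powi (l + K) * norm ((1 - 1/z) powr \<rho>) * norm (E z)"
      using z0 by (simp add: f_eq w0_def norm_mult norm_power_int power_int_add)
    also have "\<dots> \<le> norm z powi (l + K) * Bw * (exp (norm t) * norm t ^ M / norm z ^ M)"
      using Bw(1) by (intro mult_mono mult_left_mono Bw(2) z E) (auto simp: z0)
    also have "\<dots> = C * (norm z powi (l + K - int M))"
      using z0 by (simp add: C_def power_int_diff field_simps)
    also have "\<dots> \<le> C * norm z powi (-2)"
      unfolding C_def using M z0 Bw by (intro mult_left_mono power_int_increasing) auto
    also have "\<dots> = C / norm z ^ 2" by (simp add: power_int_minus field_simps)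
    finally show ?thesis by simp
  qed
  have f0: "(f has_contour_integral (2 * pi * \<i> * 0)) (circlepath 0 R)"
    by (rule circle_int_decay[OF holf _ R dec]) auto
  have cont: "continuous_on {z. 1 < norm z} g" if "g holomorphic_on {z. 1 < norm z}" for g
    using that holomorphic_on_imp_continuous_on by blast
  have ci: "g contour_integrable_on circlepath 0 R" if "g holomorphic_on {z. 1 < norm z}" for g
    by (rule contour_integrable_continuous_circlepath[OF continuous_on_subset[OF cont[OF that]]]) (use R in auto)
  have h1: "((\<lambda>z. z powi l * weight K \<rho> t z) has_contour_integral nu K \<rho> R l t) (circlepath 0 R)"
    unfolding nu_def by (rule has_contour_integral_integral, rule ci) (intro holomorphic_intros hol_weight, auto)
  have h2: "((\<lambda>z. \<Sum>m<M. t^m / fact m * (z powi (l - int m) * w0 z)) has_contour_integral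
      (\<Sum>m<M. t^m / fact m * Acoef K \<rho> R (l - int m))) (circlepath 0 R)"
  proof (rule has_contour_integral_sum, simp, rule has_contour_integral_lmul)
    fix m assume "m \<in> {..<M}"
    show "((\<lambda>z. z powi (l - int m) * w0 z) has_contour_integral Acoef K \<rho> R (l - int m)) (circlepath 0 R)"
      unfolding Acoef_def w0_def[symmetric]
      by (rule has_contour_integral_integral, rule ci) (intro holomorphic_intros hol_w0, auto)
  qed
  have "((\<lambda>z. z powi l * weight K \<rho> t z - (\<Sum>m<M. t^m / fact m * (z powi (l - int m) * w0 z))) has_contour_integral
      (nu K \<rho> R l t - (\<Sum>m<M. t^m / fact m * Acoef K \<rho> R (l - int m)))) (circlepath 0 R)"
    by (rule has_contour_integral_diff[OF h1 h2])
  hence "nu K \<rho> R l t - (\<Sum>m<M. t^m / fact m * Acoef K \<rho> R (l - int m)) = 0"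
    using f0 unfolding f_def[abs_def] by (auto dest: has_contour_integral_unique)
  thus ?thesis by simp
qed

lemma mu_nu: "mu K \<rho> R j t = nu K \<rho> R (int j) t"
  unfolding mu_def nu_def by simp

definition Mn :: "int \<Rightarrow> int \<Rightarrow> nat" where "Mn K l = nat (l + K + 2) + 2"

lemma nu_poly': "R > 1 \<Longrightarrow> nu K \<rho> R l t = (\<Sum>m<Mn K l. t^m / fact m * Acoef K \<rho> R (l - int m))"
  by (rule nu_poly) (auto simp: Mn_def)

lemma nu_is_poly: "R > 1 \<Longrightarrow> nu K \<rho> R l t = poly (\<Sum>m<Mn K l. monom (Acoef K \<rho> R (l - int m) / fact m) m) t"
  by (simp add: nu_poly' poly_sum poly_monom mult_ac)

lemma nu_deriv:
  assumes R: "R > 1"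
  shows "(nu K \<rho> R l has_field_derivative nu K \<rho> R (l - 1) t) (at t)"
proof -
  define M' where "M' = nat (l + K + 2) + 1"
  have M: "Mn K l = Suc M'" unfolding Mn_def M'_def by simp
  have e1: "nu K \<rho> R l = (\<lambda>t. \<Sum>m<Suc M'. t^m / fact m * Acoef K \<rho> R (l - int m))"
    using nu_poly'[OF R] M by (auto simp: fun_eq_iff)
  have e2: "nu K \<rho> R (l - 1) t = (\<Sum>m<M'. t^m / fact m * Acoef K \<rho> R (l - 1 - int m))"
    by (rule nu_poly[OF R, where M=M' and l="l-1"]) (auto simp: M'_def)
  have d: "((\<lambda>t. \<Sum>m<Suc M'. t^m / fact m * Acoef K \<rho> R (l - int m)) has_field_derivative
     (\<Sum>m<Suc M'. (of_nat m * (1 * t^(m - Suc 0))) / fact m * Acoef K \<rho> R (l - int m))) (at t)"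
    by (intro DERIV_sum DERIV_cmult_right DERIV_cdivide) (rule DERIV_power[OF DERIV_ident])
  also have "(\<Sum>m<Suc M'. (of_nat m * (1 * t^(m - Suc 0))) / fact m * Acoef K \<rho> R (l - int m))
      = (\<Sum>m<M'. (of_nat (Suc m) * t^m) / fact (Suc m) * Acoef K \<rho> R (l - int (Suc m)))"
    by (subst sum.lessThan_Suc_shift) simp
  also have "\<dots> = (\<Sum>m<M'. t^m / fact m * Acoef K \<rho> R (l - 1 - int m))"
  proof (rule sum.cong[OF refl])
    fix m
    have "(of_nat (Suc m) * t^m) / (fact (Suc m) :: complex) = t^m / fact m"
      by (simp add: fact_Suc field_simps del: of_nat_Suc)
    moreover have "l - int (Suc m) = l - 1 - int m" by simp
    ultimately show "(of_nat (Suc m) * t^m) / fact (Suc m) * Acoef K \<rho> R (l - int (Suc m)) =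
        t^m / fact m * Acoef K \<rho> R (l - 1 - int m)" by (simp only:)
  qed
  finally show ?thesis unfolding e1 e2[symmetric] .
qed

lemma tau_eq: "tau K \<rho> R n t = (\<Sum>p\<in>{p. p permutes {0..<n}}. signof p * (\<Prod>i = 0..<n. nu K \<rho> R (int (i + p i)) t))"
proof -
  have "tau K \<rho> R n t = (\<Sum>p\<in>{p. p permutes {0..<n}}. signof p *
      (\<Prod>i = 0..<n. mat n n (\<lambda>(a, b). mu K \<rho> R (a + b) t) $$ (i, p i)))"
    unfolding tau_def by (rule det_def') simp
  also have "\<dots> = (\<Sum>p\<in>{p. p permutes {0..<n}}. signof p * (\<Prod>i = 0..<n. nu K \<rho> R (int (i + p i)) t))"
  proof (rule sum.cong[OF refl])
    fix p assume "p \<in> {p. p permutes {0..<n}}"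
    hence "p i < n" if "i < n" for i using that permutes_in_image by fastforce
    thus "signof p * (\<Prod>i = 0..<n. mat n n (\<lambda>(a, b). mu K \<rho> R (a + b) t) $$ (i, p i)) =
        signof p * (\<Prod>i = 0..<n. nu K \<rho> R (int (i + p i)) t)"
      by (auto intro!: prod.cong simp: mu_nu)
  qed
  finally show ?thesis .
qed

lemma tau_poly: assumes R: "R > 1" shows "\<exists>p :: complex poly. \<forall>t. tau K \<rho> R n t = poly p t"
proof -
  define Pl where "Pl l = (\<Sum>m<Mn K l. monom (Acoef K \<rho> R (l - int m) / fact m) m)" for l
  define q where "q = (\<Sum>p\<in>{p. p permutes {0..<n}}. [:signof p:] * (\<Prod>i = 0..<n. Pl (int (i + p i))))"
  have "tau K \<rho> R n t = poly q t" for t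
    unfolding tau_eq q_def by (simp add: poly_sum poly_prod nu_is_poly[OF R] Pl_def)
  thus ?thesis by blast
qed

lemma det_deriv:
  fixes F :: "complex \<Rightarrow> nat \<Rightarrow> nat \<Rightarrow> complex"
  assumes d: "\<And>i j. i < n \<Longrightarrow> j < n \<Longrightarrow> ((\<lambda>t. F t i j) has_field_derivative F' i j) (at t0)"
  shows "((\<lambda>t. det (mat n n (\<lambda>(i,j). F t i j))) has_field_derivative
     (\<Sum>b<n. det (mat n n (\<lambda>(i,j). if j = b then F' i j else F t0 i j)))) (at t0)"
proof -
  define P where "P = {p. p permutes {0..<n}}"
  have pin: "p i < n" if "p \<in> P" "i < n" for p i using that permutes_in_image unfolding P_def by fastforce
  have e1: "det (mat n n (\<lambda>(i,j). G i j)) = (\<Sum>p\<in>P. signof p * (\<Prod>i = 0..<n. G i (p i)))" for G :: "nat \<Rightarrow> nat \<Rightarrow> complex"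
  proof -
    have "det (mat n n (\<lambda>(i,j). G i j)) = (\<Sum>p\<in>P. signof p * (\<Prod>i = 0..<n. mat n n (\<lambda>(i,j). G i j) $$ (i, p i)))"
      unfolding P_def by (rule det_def') simp
    also have "\<dots> = (\<Sum>p\<in>P. signof p * (\<Prod>i = 0..<n. G i (p i)))"
      by (intro sum.cong refl arg_cong2[where f="(*)"] prod.cong) (auto simp: pin)
    finally show ?thesis .
  qed
  have "((\<lambda>t. \<Sum>p\<in>P. signof p * (\<Prod>i = 0..<n. F t i (p i))) has_field_derivative
      (\<Sum>p\<in>P. signof p * (\<Sum>k\<in>{0..<n}. F' k (p k) * (\<Prod>i\<in>{0..<n}-{k}. F t0 i (p i))))) (at t0)"
    by (intro DERIV_sum DERIV_cmult has_field_derivative_prod d) (auto simp: pin)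
  also have "(\<Sum>p\<in>P. signof p * (\<Sum>k\<in>{0..<n}. F' k (p k) * (\<Prod>i\<in>{0..<n}-{k}. F t0 i (p i))))
      = (\<Sum>b<n. \<Sum>p\<in>P. signof p * (\<Prod>i = 0..<n. (if p i = b then F' i (p i) else F t0 i (p i))))"
  proof -
    have "(\<Sum>k\<in>{0..<n}. F' k (p k) * (\<Prod>i\<in>{0..<n}-{k}. F t0 i (p i)))
        = (\<Sum>b<n. \<Prod>i = 0..<n. (if p i = b then F' i (p i) else F t0 i (p i)))" if p: "p \<in> P" for p
    proof -
      have bij: "bij_betw p {0..<n} {0..<n}" using p unfolding P_def by (auto intro: permutes_imp_bij)
      have inj: "inj p" using p unfolding P_def by (auto intro: permutes_inj)
      have "(\<Sum>b<n. \<Prod>i = 0..<n. (if p i = b then F' i (p i) else F t0 i (p i)))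
          = (\<Sum>b\<in>{0..<n}. \<Prod>i = 0..<n. (if p i = b then F' i (p i) else F t0 i (p i)))"
        by (simp add: lessThan_atLeast0)
      also have "\<dots> = (\<Sum>k\<in>{0..<n}. \<Prod>i = 0..<n. (if p i = p k then F' i (p i) else F t0 i (p i)))"
        by (rule sum.reindex_bij_betw[OF bij, symmetric])
      also have "\<dots> = (\<Sum>k\<in>{0..<n}. \<Prod>i = 0..<n. (if i = k then F' i (p i) else F t0 i (p i)))"
        using inj by (simp add: inj_eq)
      also have "\<dots> = (\<Sum>k\<in>{0..<n}. F' k (p k) * (\<Prod>i\<in>{0..<n}-{k}. F t0 i (p i)))"
      proof (rule sum.cong[OF refl])
        fix k assume k: "k \<in> {0..<n}"
        have "(\<Prod>i = 0..<n. (if i = k then F' i (p i) else F t0 i (p i)))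
            = (if k = k then F' k (p k) else F t0 k (p k)) * (\<Prod>i\<in>{0..<n}-{k}. (if i = k then F' i (p i) else F t0 i (p i)))"
          by (rule prod.remove[OF _ k]) simp
        also have "(\<Prod>i\<in>{0..<n}-{k}. (if i = k then F' i (p i) else F t0 i (p i))) = (\<Prod>i\<in>{0..<n}-{k}. F t0 i (p i))"
          by (rule prod.cong) auto
        finally show "(\<Prod>i = 0..<n. (if i = k then F' i (p i) else F t0 i (p i))) = F' k (p k) * (\<Prod>i\<in>{0..<n}-{k}. F t0 i (p i))"
          by simp
      qed
      finally show ?thesis by simp
    qed
    hence "(\<Sum>p\<in>P. signof p * (\<Sum>k\<in>{0..<n}. F' k (p k) * (\<Prod>i\<in>{0..<n}-{k}. F t0 i (p i))))
        = (\<Sum>p\<in>P. signof p * (\<Sum>b<n. \<Prod>i = 0..<n. (if p i = b then F' i (p i) else F t0 i (p i))))"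
      by (intro sum.cong) auto
    also have "\<dots> = (\<Sum>p\<in>P. \<Sum>b<n. signof p * (\<Prod>i = 0..<n. (if p i = b then F' i (p i) else F t0 i (p i))))"
      by (simp add: sum_distrib_left)
    also have "\<dots> = (\<Sum>b<n. \<Sum>p\<in>P. signof p * (\<Prod>i = 0..<n. (if p i = b then F' i (p i) else F t0 i (p i))))"
      by (rule sum.swap)
    finally show ?thesis .
  qed
  also have "\<dots> = (\<Sum>b<n. det (mat n n (\<lambda>(i,j). if j = b then F' i j else F t0 i j)))"
    by (subst e1) simp
  finally show ?thesis by (subst e1) simp
qed

lemma mult22:
  assumes "A \<in> carrier_mat 2 2" "B \<in> carrier_mat 2 2" "i < 2" "j < 2"
  shows "(A * B) $$ (i, j) = A $$ (i, 0) * B $$ (0, j) + A $$ (i, 1) * B $$ (1, j)"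
  using assms by (simp add: scalar_prod_def numeral_2_eq_2 Matrix.row_def Matrix.col_def)

lemma zpow_entries:
  assumes "A \<in> carrier_mat 2 2" "(z::complex) \<noteq> 0"
  shows "(A * zpow_sigma3 n (inverse z)) $$ (0, 0) = A $$ (0, 0) / z ^ n"
    "(A * zpow_sigma3 n (inverse z)) $$ (0, 1) = A $$ (0, 1) * z ^ n"
    "(A * zpow_sigma3 n (inverse z)) $$ (1, 0) = A $$ (1, 0) / z ^ n"
    "(A * zpow_sigma3 n (inverse z)) $$ (1, 1) = A $$ (1, 1) * z ^ n"
proof -
  have Z: "zpow_sigma3 n (inverse z) \<in> carrier_mat 2 2" unfolding zpow_sigma3_def by simp
  show "(A * zpow_sigma3 n (inverse z)) $$ (0, 0) = A $$ (0, 0) / z ^ n"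
    "(A * zpow_sigma3 n (inverse z)) $$ (0, 1) = A $$ (0, 1) * z ^ n"
    "(A * zpow_sigma3 n (inverse z)) $$ (1, 0) = A $$ (1, 0) / z ^ n"
    "(A * zpow_sigma3 n (inverse z)) $$ (1, 1) = A $$ (1, 1) * z ^ n"
    by (subst mult22[OF assms(1) Z]; simp add: zpow_sigma3_def power_inverse divide_inverse)+
qed

lemma jump_entries:
  assumes "A \<in> carrier_mat 2 2"
  shows "(A * jump_mat K \<rho> t z) $$ (0, 0) = A $$ (0, 0)"
    "(A * jump_mat K \<rho> t z) $$ (1, 0) = A $$ (1, 0)"
    "(A * jump_mat K \<rho> t z) $$ (0, 1) = A $$ (0, 0) * weight K \<rho> t z + A $$ (0, 1)"
    "(A * jump_mat K \<rho> t z) $$ (1, 1) = A $$ (1, 0) * weight K \<rho> t z + A $$ (1, 1)"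
proof -
  have J: "jump_mat K \<rho> t z \<in> carrier_mat 2 2" unfolding jump_mat_def by simp
  show "(A * jump_mat K \<rho> t z) $$ (0, 0) = A $$ (0, 0)"
    "(A * jump_mat K \<rho> t z) $$ (1, 0) = A $$ (1, 0)"
    "(A * jump_mat K \<rho> t z) $$ (0, 1) = A $$ (0, 0) * weight K \<rho> t z + A $$ (0, 1)"
    "(A * jump_mat K \<rho> t z) $$ (1, 1) = A $$ (1, 0) * weight K \<rho> t z + A $$ (1, 1)"
    by (subst mult22[OF assms(1) J]; simp add: jump_mat_def)+
qed

lemma H1:
  fixes z u :: complex
  assumes z: "norm z \<ge> 1" and u: "norm u \<le> M" and pq: "p + 2 \<le> q"
  shows "norm (u * z ^ p / z ^ q) \<le> M / norm z ^ 2"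
proof -
  have z0: "norm z > 0" using z by auto
  have M0: "M \<ge> 0" using u norm_ge_zero order_trans by blast
  have e: "norm z ^ p / norm z ^ q = 1 / norm z ^ (q - p)"
    using z0 pq by (simp add: power_diff)
  have "norm z ^ 2 \<le> norm z ^ (q - p)" using z pq by (intro power_increasing) auto
  hence le: "1 / norm z ^ (q - p) \<le> 1 / norm z ^ 2" using z0 by (intro divide_left_mono) auto
  have "norm (u * z ^ p / z ^ q) = norm u * (norm z ^ p / norm z ^ q)"
    by (simp add: norm_mult norm_divide norm_power)
  also have "\<dots> \<le> M * (1 / norm z ^ 2)" unfolding e using u le M0 z0
    by (intro mult_mono) auto
  finally show ?thesis by simp
qed

lemma H2:
  fixes z u :: complex
  assumes z: "norm z \<ge> 1" and u: "norm u \<le> M / norm z" and pq: "p + 1 \<le> q"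
  shows "norm (u * z ^ p / z ^ q) \<le> M / norm z ^ 2"
proof -
  have z0: "norm z > 0" using z by auto
  have M0: "M \<ge> 0" using u norm_ge_zero[of u] z0 by (metis divide_nonneg_pos le_less_trans linorder_not_less zero_le_divide_iff)
  have e: "norm z ^ p / norm z ^ q = 1 / norm z ^ (q - p)"
    using z0 pq by (simp add: power_diff)
  have "norm z ^ 1 \<le> norm z ^ (q - p)" using z pq by (intro power_increasing) auto
  hence le: "1 / norm z ^ (q - p) \<le> 1 / norm z" using z0 by (intro divide_left_mono) auto
  have "norm (u * z ^ p / z ^ q) = norm u * (norm z ^ p / norm z ^ q)"
    by (simp add: norm_mult norm_divide norm_power)
  also have "\<dots> \<le> (M / norm z) * (1 / norm z)" unfolding e using u le M0 z0
    by (intro mult_mono) auto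
  finally show ?thesis by (simp add: power2_eq_square)
qed

lemma H3:
  fixes z u :: complex
  assumes z: "z \<noteq> 0" and u: "norm (u - 1) \<le> M / norm z"
  shows "norm (u / z - 1 / z) \<le> M / norm z ^ 2"
proof -
  have "u / z - 1 / z = (u - 1) / z" by (simp add: diff_divide_distrib)
  hence "norm (u / z - 1 / z) = norm (u - 1) / norm z" by (simp add: norm_divide)
  also have "\<dots> \<le> (M / norm z) / norm z" using z u by (intro divide_right_mono) auto
  finally show ?thesis by (simp add: power2_eq_square)
qed

lemma good_bound:
  assumes "good_off_circle R f"
  shows "\<exists>B. \<forall>z. norm z < R + 1 \<longrightarrow> norm z \<noteq> R \<longrightarrow> norm (f z) \<le> B"
proof -
  have "bounded (f ` (ball 0 (R + 1) - sphere 0 R))"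
    using assms unfolding good_off_circle_def by blast
  then obtain B where "\<And>x. x \<in> f ` (ball 0 (R + 1) - sphere 0 R) \<Longrightarrow> norm x \<le> B"
    by (auto simp: bounded_iff)
  thus ?thesis by (intro exI[of _ B]) auto
qed

lemma nu_has:
  assumes R: "R > 1"
  shows "((\<lambda>z. z powi l * weight K \<rho> t z) has_contour_integral nu K \<rho> R l t) (circlepath 0 R)"
proof -
  have "(\<lambda>z. z powi l * weight K \<rho> t z) holomorphic_on {z. 1 < norm z}"
    by (intro holomorphic_intros hol_weight) auto
  hence "continuous_on {z. 1 < norm z} (\<lambda>z. z powi l * weight K \<rho> t z)"
    by (rule holomorphic_on_imp_continuous_on)
  hence "(\<lambda>z. z powi l * weight K \<rho> t z) contour_integrable_on circlepath 0 R"
    by (rule contour_integrable_continuous_circlepath[OF continuous_on_subset]) (use R in auto)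
  thus ?thesis unfolding nu_def by (rule has_contour_integral_integral)
qed

lemma lin_comb:
  assumes R: "R > 1"
  shows "((\<lambda>z. (\<Sum>i\<le>n. c i * z ^ i) * weight K \<rho> t z * z powi k) has_contour_integral
     (\<Sum>i\<le>n. c i * nu K \<rho> R (int i + k) t)) (circlepath 0 R)"
proof -
  have "((\<lambda>z. \<Sum>i\<le>n. c i * (z powi (int i + k) * weight K \<rho> t z)) has_contour_integral
     (\<Sum>i\<le>n. c i * nu K \<rho> R (int i + k) t)) (circlepath 0 R)"
    by (intro has_contour_integral_sum has_contour_integral_lmul nu_has R) auto
  thus ?thesis
  proof (rule has_contour_integral_eq)
    fix z assume "z \<in> path_image (circlepath 0 R)"
    hence z: "z \<noteq> 0" using R by auto
    have "c i * (z powi (int i + k) * weight K \<rho> t z) = c i * z ^ i * weight K \<rho> t z * z powi k" for i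
      using z by (simp add: power_int_add)
    thus "(\<Sum>i\<le>n. c i * (z powi (int i + k) * weight K \<rho> t z)) = (\<Sum>i\<le>n. c i * z ^ i) * weight K \<rho> t z * z powi k"
      by (simp only: sum_distrib_right)
  qed
qed

locale rhp =
  fixes K :: int and \<rho> :: complex and R :: real and n :: nat and t :: complex
    and Y Yp Ym :: "complex \<Rightarrow> complex mat" and B C r0 :: real
  assumes R: "R > 1" and n: "n \<ge> 1"
  and car: "\<And>z. Y z \<in> carrier_mat 2 2"
  and hin: "\<And>i j. i < 2 \<Longrightarrow> j < 2 \<Longrightarrow> (\<lambda>z. Y z $$ (i,j)) holomorphic_on ball 0 R"
  and hout: "\<And>i j. i < 2 \<Longrightarrow> j < 2 \<Longrightarrow> (\<lambda>z. Y z $$ (i,j)) holomorphic_on - cball 0 R"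
  and bnd: "\<And>i j z. i < 2 \<Longrightarrow> j < 2 \<Longrightarrow> norm z < R + 1 \<Longrightarrow> norm z \<noteq> R \<Longrightarrow> norm (Y z $$ (i,j)) \<le> B"
  and B0: "B \<ge> 0"
  and carp: "\<And>z. z \<in> sphere 0 R \<Longrightarrow> Yp z \<in> carrier_mat 2 2 \<and> Ym z \<in> carrier_mat 2 2"
  and limp: "\<And>i j z. i < 2 \<Longrightarrow> j < 2 \<Longrightarrow> z \<in> sphere 0 R \<Longrightarrow>
      ((\<lambda>w. Y w $$ (i,j)) \<longlongrightarrow> Yp z $$ (i,j)) (at z within ball 0 R)"
  and limm: "\<And>i j z. i < 2 \<Longrightarrow> j < 2 \<Longrightarrow> z \<in> sphere 0 R \<Longrightarrow>
      ((\<lambda>w. Y w $$ (i,j)) \<longlongrightarrow> Ym z $$ (i,j)) (at z within - cball 0 R)"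
  and jump: "\<And>z. z \<in> sphere 0 R \<Longrightarrow> Yp z = Ym z * jump_mat K \<rho> t z"
  and C0: "C \<ge> 0" and r0: "r0 \<ge> 1"
  and asym: "\<And>z i j. norm z \<ge> r0 \<Longrightarrow> i < 2 \<Longrightarrow> j < 2 \<Longrightarrow>
      norm ((Y z * zpow_sigma3 n (inverse z)) $$ (i,j) - (if i = j then 1 else 0)) \<le> C / norm z"

lemma rhp_intro:
  assumes RHP: "RHP_solution K \<rho> R n t Y" and R: "R > 1" and n: "n \<ge> 1"
  shows "\<exists>Yp Ym B C r0. rhp K \<rho> R n t Y Yp Ym B C r0"
proof -
  note defs = RHP[unfolded RHP_solution_def]
  have car: "\<And>z. Y z \<in> carrier_mat 2 2" using defs by blast
  have good: "\<And>i j. i < 2 \<Longrightarrow> j < 2 \<Longrightarrow> good_off_circle R (\<lambda>z. Y z $$ (i, j))" using defs by blast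
  obtain Yp Ym where YpYm: "\<forall>z \<in> sphere 0 R.
        Yp z \<in> carrier_mat 2 2 \<and> Ym z \<in> carrier_mat 2 2 \<and>
        (\<forall>i<2. \<forall>j<2.
           ((\<lambda>w. Y w $$ (i, j)) \<longlongrightarrow> Yp z $$ (i, j)) (at z within ball 0 R) \<and>
           ((\<lambda>w. Y w $$ (i, j)) \<longlongrightarrow> Ym z $$ (i, j)) (at z within - cball 0 R)) \<and>
        Yp z = Ym z * jump_mat K \<rho> t z" using defs by blast
  obtain C r where Cr: "\<forall>z. norm z > r \<longrightarrow>
        (\<forall>i<2. \<forall>j<2.
           norm ((Y z * zpow_sigma3 n (inverse z)) $$ (i, j) - (if i = j then 1 else 0)) \<le> C / norm z)"
    using defs by blast
  have "\<exists>B. \<forall>i<2. \<forall>j<2. \<forall>z. norm z < R + 1 \<longrightarrow> norm z \<noteq> R \<longrightarrow> norm (Y z $$ (i,j)) \<le> B"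
  proof -
    obtain B00 where B00: "\<forall>z. norm z < R + 1 \<longrightarrow> norm z \<noteq> R \<longrightarrow> norm (Y z $$ (0,0)) \<le> B00"
      using good_bound[OF good[of 0 0]] by auto
    obtain B01 where B01: "\<forall>z. norm z < R + 1 \<longrightarrow> norm z \<noteq> R \<longrightarrow> norm (Y z $$ (0,1)) \<le> B01"
      using good_bound[OF good[of 0 1]] by auto
    obtain B10 where B10: "\<forall>z. norm z < R + 1 \<longrightarrow> norm z \<noteq> R \<longrightarrow> norm (Y z $$ (1,0)) \<le> B10"
      using good_bound[OF good[of 1 0]] by auto
    obtain B11 where B11: "\<forall>z. norm z < R + 1 \<longrightarrow> norm z \<noteq> R \<longrightarrow> norm (Y z $$ (1,1)) \<le> B11"
      using good_bound[OF good[of 1 1]] by auto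
    have "norm (Y z $$ (i,j)) \<le> max (max B00 B01) (max B10 B11)"
      if "i < 2" "j < 2" "norm z < R + 1" "norm z \<noteq> R" for i j z
      using that B00 B01 B10 B11 by (auto simp: less_2_cases_iff le_max_iff_disj)
    thus ?thesis by blast
  qed
  then obtain B where B: "\<forall>i<2. \<forall>j<2. \<forall>z. norm z < R + 1 \<longrightarrow> norm z \<noteq> R \<longrightarrow> norm (Y z $$ (i,j)) \<le> B" by blast
  have "rhp K \<rho> R n t Y Yp Ym (max B 0) \<bar>C\<bar> (max r 1 + 1)"
  proof (unfold_locales)
    fix i j assume "i < (2::nat)" "j < (2::nat)"
    thus "(\<lambda>z. Y z $$ (i, j)) holomorphic_on ball 0 R" "(\<lambda>z. Y z $$ (i, j)) holomorphic_on - cball 0 R"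
      using good[of i j] unfolding good_off_circle_def by auto
  next
    fix i j and z :: complex assume "i < (2::nat)" "j < (2::nat)" "norm z < R + 1" "norm z \<noteq> R"
    thus "norm (Y z $$ (i, j)) \<le> max B 0" using B by force
  next
    fix i j and z :: complex assume ij: "i < (2::nat)" "j < (2::nat)" and zs: "z \<in> sphere 0 R"
    have "\<forall>i<2. \<forall>j<2.
           ((\<lambda>w. Y w $$ (i, j)) \<longlongrightarrow> Yp z $$ (i, j)) (at z within ball 0 R) \<and>
           ((\<lambda>w. Y w $$ (i, j)) \<longlongrightarrow> Ym z $$ (i, j)) (at z within - cball 0 R)"
      using bspec[OF YpYm zs] by blast
    thus "((\<lambda>w. Y w $$ (i, j)) \<longlongrightarrow> Yp z $$ (i, j)) (at z within ball 0 R)"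
      "((\<lambda>w. Y w $$ (i, j)) \<longlongrightarrow> Ym z $$ (i, j)) (at z within - cball 0 R)" using ij by blast+
  next
    fix z :: complex and i j assume z: "max r 1 + 1 \<le> norm z" and ij: "i < (2::nat)" "j < (2::nat)"
    hence "norm z > r" by auto
    hence "norm ((Y z * zpow_sigma3 n (inverse z)) $$ (i, j) - (if i = j then 1 else 0)) \<le> C / norm z"
      using Cr ij by blast
    also have "\<dots> \<le> \<bar>C\<bar> / norm z" using z by (intro divide_right_mono) auto
    finally show "norm ((Y z * zpow_sigma3 n (inverse z)) $$ (i, j) - (if i = j then 1 else 0)) \<le> \<bar>C\<bar> / norm z" .
  next
    fix z :: complex assume zs: "z \<in> sphere 0 R"
    show "Yp z \<in> carrier_mat 2 2 \<and> Ym z \<in> carrier_mat 2 2" using bspec[OF YpYm zs] by blast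
  next
    fix z :: complex assume zs: "z \<in> sphere 0 R"
    show "Yp z = Ym z * jump_mat K \<rho> t z" using bspec[OF YpYm zs] by blast
  qed (use car R n in auto)
  thus ?thesis by blast
qed

context rhp begin

lemma as00: assumes "norm z \<ge> r0" shows "norm (Y z $$ (0,0) / z ^ n - 1) \<le> C / norm z"
proof -
  have "z \<noteq> 0" using assms r0 by auto
  have e: "(Y z * zpow_sigma3 n (inverse z)) $$ (0, 0) = Y z $$ (0, 0) / z ^ n"
    by (rule zpow_entries(1)[OF car[of z] \<open>z \<noteq> 0\<close>])
  have "norm ((Y z * zpow_sigma3 n (inverse z)) $$ (0,0) - (if (0::nat) = 0 then 1 else 0)) \<le> C / norm z"
    by (rule asym[OF assms]) auto
  thus ?thesis unfolding e by simp
qed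

lemma as01: assumes "norm z \<ge> r0" shows "norm (Y z $$ (0,1) * z ^ n ) \<le> C / norm z"
proof -
  have "z \<noteq> 0" using assms r0 by auto
  have e: "(Y z * zpow_sigma3 n (inverse z)) $$ (0, 1) = Y z $$ (0, 1) * z ^ n"
    by (rule zpow_entries(2)[OF car[of z] \<open>z \<noteq> 0\<close>])
  have "norm ((Y z * zpow_sigma3 n (inverse z)) $$ (0,1) - (if (0::nat) = 1 then 1 else 0)) \<le> C / norm z"
    by (rule asym[OF assms]) auto
  thus ?thesis unfolding e by simp
qed

lemma as10: assumes "norm z \<ge> r0" shows "norm (Y z $$ (1,0) / z ^ n ) \<le> C / norm z"
proof -
  have "z \<noteq> 0" using assms r0 by auto
  have e: "(Y z * zpow_sigma3 n (inverse z)) $$ (1, 0) = Y z $$ (1, 0) / z ^ n"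
    by (rule zpow_entries(3)[OF car[of z] \<open>z \<noteq> 0\<close>])
  have "norm ((Y z * zpow_sigma3 n (inverse z)) $$ (1,0) - (if (1::nat) = 0 then 1 else 0)) \<le> C / norm z"
    by (rule asym[OF assms]) auto
  thus ?thesis unfolding e by simp
qed

lemma as11: assumes "norm z \<ge> r0" shows "norm (Y z $$ (1,1) * z ^ n - 1) \<le> C / norm z"
proof -
  have "z \<noteq> 0" using assms r0 by auto
  have e: "(Y z * zpow_sigma3 n (inverse z)) $$ (1, 1) = Y z $$ (1, 1) * z ^ n"
    by (rule zpow_entries(4)[OF car[of z] \<open>z \<noteq> 0\<close>])
  have "norm ((Y z * zpow_sigma3 n (inverse z)) $$ (1,1) - (if (1::nat) = 1 then 1 else 0)) \<le> C / norm z"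
    by (rule asym[OF assms]) auto
  thus ?thesis unfolding e by simp
qed

lemma Cz: assumes "norm z \<ge> r0" shows "C / norm z \<le> C"
proof -
  have "C / norm z \<le> C / 1" using assms r0 C0 by (intro divide_left_mono) auto
  thus ?thesis by simp
qed

lemma bnd1: "norm (u - 1) \<le> D \<Longrightarrow> norm (u::complex) \<le> 1 + D"
  using norm_triangle_ineq[of "u - 1" 1] by simp

lemma inner_e:
  assumes "i < 2" "j < 2"
  shows "((\<lambda>s. Yp s $$ (i,j) / s ^ Suc m) has_contour_integral
     (2 * pi * \<i> / fact m * (deriv ^^ m) (\<lambda>z. Y z $$ (i,j)) 0)) (circlepath 0 R)"
proof (rule inner_int[OF hin[OF assms], where B=B])
  show "R > 0" using R by simp
  fix z :: complex assume "z \<in> ball 0 R" thus "norm (Y z $$ (i,j)) \<le> B" using bnd[OF assms, of z] R by auto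
next
  fix z :: complex assume "z \<in> sphere 0 R" thus "((\<lambda>z. Y z $$ (i,j)) \<longlongrightarrow> Yp z $$ (i,j)) (at z within ball 0 R)"
    by (rule limp[OF assms])
qed

lemma inner0_e:
  assumes "i < 2" "j < 2"
  shows "((\<lambda>s. Yp s $$ (i,j) * s ^ k) has_contour_integral 0) (circlepath 0 R)"
proof (rule inner_int0[OF hin[OF assms], where B=B])
  show "R > 0" using R by simp
  fix z :: complex assume "z \<in> ball 0 R" thus "norm (Y z $$ (i,j)) \<le> B" using bnd[OF assms, of z] R by auto
next
  fix z :: complex assume "z \<in> sphere 0 R" thus "((\<lambda>z. Y z $$ (i,j)) \<longlongrightarrow> Yp z $$ (i,j)) (at z within ball 0 R)"
    by (rule limp[OF assms])
qed

lemma outer_e: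
  assumes ij: "i < 2" "j < 2" and hh: "h holomorphic_on - {0}"
    and hb: "\<And>z. R < norm z \<Longrightarrow> norm z < R + 1 \<Longrightarrow> norm (h z) \<le> Bh"
    and dec: "\<And>z. norm z \<ge> r0 \<Longrightarrow> norm (Y z $$ (i,j) * h z - c / z) \<le> M / norm z ^ 2"
  shows "((\<lambda>s. Ym s $$ (i,j) * h s) has_contour_integral (2 * pi * \<i> * c)) (circlepath 0 R)"
proof (rule outer_int[where B="B * Bh"])
  have "h holomorphic_on - cball 0 R" by (rule holomorphic_on_subset[OF hh]) (use R in auto)
  thus "(\<lambda>s. Y s $$ (i,j) * h s) holomorphic_on - cball 0 R" by (intro holomorphic_intros hout ij)
  show "R > 0" using R by simp
  fix z :: complex
  assume z: "R < norm z" "norm z < R + 1"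
  thus "norm (Y z $$ (i, j) * h z) \<le> B * Bh"
    unfolding norm_mult using bnd[OF ij z(2)] hb[OF z] B0 by (intro mult_mono) auto
next
  fix z :: complex assume z: "z \<in> sphere 0 R"
  hence "z \<noteq> 0" using R by auto
  have "isCont h z" using hh \<open>z \<noteq> 0\<close>
    by (intro holomorphic_on_imp_continuous_on[THEN continuous_on_interior]) (auto simp: interior_open open_Compl)
  hence "(h \<longlongrightarrow> h z) (at z within - cball 0 R)"
    using continuous_at_imp_continuous_at_within[of z h "- cball 0 R"] by (simp add: continuous_within)
  thus "((\<lambda>s. Y s $$ (i,j) * h s) \<longlongrightarrow> Ym z $$ (i,j) * h z) (at z within - cball 0 R)"
    by (intro tendsto_mult limm ij z)
qed (fact dec)

end

lemma hci_eq_unique: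
  assumes "(f has_contour_integral a) g" "(h has_contour_integral b) g" "\<And>x. x \<in> path_image g \<Longrightarrow> f x = h x"
  shows "a = b"
  using has_contour_integral_unique[OF has_contour_integral_eq[OF assms(1) assms(3)] assms(2)] .

context rhp begin

definition "ca k = (deriv ^^ k) (\<lambda>z. Y z $$ (0,0)) 0 / fact k"
definition "cd k = (deriv ^^ k) (\<lambda>z. Y z $$ (1,0)) 0 / fact k"

lemma sph: "z \<in> path_image (circlepath 0 R) \<Longrightarrow> z \<in> sphere 0 R \<and> z \<noteq> 0"
  using R by auto

lemma jmp:
  assumes z: "z \<in> sphere 0 R"
  shows "Yp z $$ (0,0) = Ym z $$ (0,0)" "Yp z $$ (1,0) = Ym z $$ (1,0)"
    "Yp z $$ (0,1) = Ym z $$ (0,0) * weight K \<rho> t z + Ym z $$ (0,1)"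
    "Yp z $$ (1,1) = Ym z $$ (1,0) * weight K \<rho> t z + Ym z $$ (1,1)"
  using jump_entries[OF conjunct2[OF carp[OF z]], of K \<rho> t z] jump[OF z] by simp_all

lemma jmpp:
  assumes z: "z \<in> path_image (circlepath 0 R)"
  shows "Yp z $$ (0,0) = Ym z $$ (0,0)" "Yp z $$ (1,0) = Ym z $$ (1,0)"
    "Yp z $$ (0,1) = Ym z $$ (0,0) * weight K \<rho> t z + Ym z $$ (0,1)"
    "Yp z $$ (1,1) = Ym z $$ (1,0) * weight K \<rho> t z + Ym z $$ (1,1)"
  using jmp[OF conjunct1[OF sph[OF z]]] by simp_all

lemma coef_in:
  assumes "i < 2"
  shows "((\<lambda>s. Yp s $$ (i,0) / s ^ Suc k) has_contour_integral
     (2 * pi * \<i> * ((deriv ^^ k) (\<lambda>z. Y z $$ (i,0)) 0 / fact k))) (circlepath 0 R)"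
  using inner_e[OF assms, of 0 k] by (simp add: field_simps)

lemma u00b: "norm z \<ge> r0 \<Longrightarrow> norm (Y z $$ (0,0) / z ^ n) \<le> 1 + C"
  using bnd1[OF order_trans[OF as00 Cz]] by blast
lemma u11b: "norm z \<ge> r0 \<Longrightarrow> norm (Y z $$ (1,1) * z ^ n) \<le> 1 + C"
  using bnd1[OF order_trans[OF as11 Cz]] by blast

lemma hol_inv_pow: "(\<lambda>s::complex. 1 / s ^ m) holomorphic_on - {0}"
  by (intro holomorphic_intros) auto

lemma bnd_inv_pow: fixes z :: complex assumes "R < norm z" shows "norm (1 / z ^ m) \<le> 1 / R ^ m"
proof -
  have "R ^ m \<le> norm z ^ m" using assms R by (intro power_mono) auto
  moreover have "0 < norm z ^ m * R ^ m" using R assms by (intro mult_pos_pos zero_less_power) auto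
  ultimately have "1 / norm z ^ m \<le> 1 / R ^ m" using R by (intro divide_left_mono) auto
  thus ?thesis by (simp add: norm_divide norm_power)
qed

lemma ca_high: assumes "k > n" shows "ca k = 0"
proof -
  have o: "((\<lambda>s. Ym s $$ (0,0) * (1 / s ^ Suc k)) has_contour_integral (2 * pi * \<i> * 0)) (circlepath 0 R)"
  proof (rule outer_e[OF _ _ hol_inv_pow bnd_inv_pow])
    fix z :: complex assume z: "norm z \<ge> r0"
    hence z0: "z \<noteq> 0" "norm z \<ge> 1" using r0 by auto
    have e: "Y z $$ (0,0) * (1 / z ^ Suc k) - 0 / z = Y z $$ (0,0) / z ^ n * z ^ n / z ^ Suc k"
      using z0 by simp
    show "norm (Y z $$ (0,0) * (1 / z ^ Suc k) - 0 / z) \<le> (1 + C) / norm z ^ 2"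
      unfolding e by (rule H1[OF z0(2) u00b[OF z]]) (use assms in auto)
  qed auto
  have "2 * pi * \<i> * ca k = 2 * pi * \<i> * 0"
    proof (rule hci_eq_unique[OF coef_in[of 0 k, folded ca_def] o])
    fix x assume x: "x \<in> path_image (circlepath 0 R)"
    show "Yp x $$ (0,0) / x ^ Suc k = Ym x $$ (0,0) * (1 / x ^ Suc k)"
      using jmpp(1)[OF x] by (simp add: divide_inverse)
  qed simp
  thus ?thesis by simp
qed

lemma ca_n: "ca n = 1"
proof -
  have o: "((\<lambda>s. Ym s $$ (0,0) * (1 / s ^ Suc n)) has_contour_integral (2 * pi * \<i> * 1)) (circlepath 0 R)"
  proof (rule outer_e[OF _ _ hol_inv_pow bnd_inv_pow])
    fix z :: complex assume z: "norm z \<ge> r0"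
    hence z0: "z \<noteq> 0" "norm z \<ge> 1" using r0 by auto
    have e: "Y z $$ (0,0) * (1 / z ^ Suc n) = Y z $$ (0,0) / z ^ n / z"
      using z0 by (simp add: field_simps)
    show "norm (Y z $$ (0,0) * (1 / z ^ Suc n) - 1 / z) \<le> C / norm z ^ 2"
      unfolding e by (rule H3[OF z0(1) as00[OF z]])
  qed auto
  have "2 * pi * \<i> * ca n = 2 * pi * \<i> * 1"
    proof (rule hci_eq_unique[OF coef_in[of 0 n, folded ca_def] o])
    fix x assume x: "x \<in> path_image (circlepath 0 R)"
    show "Yp x $$ (0,0) / x ^ Suc n = Ym x $$ (0,0) * (1 / x ^ Suc n)"
      using jmpp(1)[OF x] by (simp add: divide_inverse)
  qed simp
  thus ?thesis by simp
qed

lemma cd_high: assumes "k \<ge> n" shows "cd k = 0"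
proof -
  have o: "((\<lambda>s. Ym s $$ (1,0) * (1 / s ^ Suc k)) has_contour_integral (2 * pi * \<i> * 0)) (circlepath 0 R)"
  proof (rule outer_e[OF _ _ hol_inv_pow bnd_inv_pow])
    fix z :: complex assume z: "norm z \<ge> r0"
    hence z0: "z \<noteq> 0" "norm z \<ge> 1" using r0 by auto
    have e: "Y z $$ (1,0) * (1 / z ^ Suc k) - 0 / z = Y z $$ (1,0) / z ^ n * z ^ n / z ^ Suc k"
      using z0 by simp
    show "norm (Y z $$ (1,0) * (1 / z ^ Suc k) - 0 / z) \<le> C / norm z ^ 2"
      unfolding e by (rule H2[OF z0(2) as10[OF z]]) (use assms in auto)
  qed auto
  have "2 * pi * \<i> * cd k = 2 * pi * \<i> * 0"
    proof (rule hci_eq_unique[OF coef_in[of 1 k, folded cd_def] o])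
    fix x assume x: "x \<in> path_image (circlepath 0 R)"
    show "Yp x $$ (1,0) / x ^ Suc k = Ym x $$ (1,0) * (1 / x ^ Suc k)"
      using jmpp(2)[OF x] by (simp add: divide_inverse)
  qed simp
  thus ?thesis by simp
qed

end

lemma taylor_finite:
  assumes hol: "f holomorphic_on ball 0 R" and c: "\<And>k. k > N \<Longrightarrow> (deriv ^^ k) f 0 / fact k = 0"
    and z: "z \<in> ball 0 R"
  shows "f z = (\<Sum>k\<le>N. (deriv ^^ k) f 0 / fact k * z ^ k)"
proof -
  have s1: "(\<lambda>k. (deriv ^^ k) f 0 / fact k * (z - 0) ^ k) sums f z"
    by (rule holomorphic_power_series[OF hol z])
  have s2: "(\<lambda>k. (deriv ^^ k) f 0 / fact k * (z - 0) ^ k) sums (\<Sum>k\<in>{..N}. (deriv ^^ k) f 0 / fact k * (z - 0) ^ k)"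
    by (rule sums_finite) (auto simp: c not_le)
  show ?thesis using sums_unique2[OF s1 s2] by simp
qed

lemma lim_eq_fun:
  fixes f g :: "complex \<Rightarrow> complex"
  assumes lim: "(f \<longlongrightarrow> L) (at z within ball 0 R)" and z: "z \<in> sphere 0 R" and R: "R > 0"
    and eq: "\<And>w. w \<in> ball 0 R \<Longrightarrow> f w = g w" and cont: "isCont g z"
  shows "L = g z"
proof -
  have nt: "at z within ball 0 R \<noteq> bot"
    using z R by (simp add: trivial_limit_within islimpt_ball)
  have "\<forall>\<^sub>F w in at z within ball 0 R. f w = g w"
    unfolding eventually_at_filter by (rule always_eventually) (auto simp: eq)
  hence "(g \<longlongrightarrow> L) (at z within ball 0 R)" using lim tendsto_cong by blast
  moreover have "(g \<longlongrightarrow> g z) (at z within ball 0 R)"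
    using cont continuous_at_imp_continuous_at_within[of z g "ball 0 R"] by (simp add: continuous_within)
  ultimately show ?thesis using tendsto_unique[OF nt] by blast
qed

context rhp begin

definition "Pp z = (\<Sum>i\<le>n. ca i * z ^ i)"
definition "Qp z = (\<Sum>i\<le>n. cd i * z ^ i)"

lemma P_in: "z \<in> ball 0 R \<Longrightarrow> Y z $$ (0,0) = Pp z"
  unfolding Pp_def ca_def by (rule taylor_finite[OF hin]) (use ca_high[unfolded ca_def] in auto)

lemma Q_in: "z \<in> ball 0 R \<Longrightarrow> Y z $$ (1,0) = Qp z"
  unfolding Qp_def cd_def by (rule taylor_finite[OF hin]) (use cd_high[unfolded cd_def] in auto)

lemma P_sph: assumes "z \<in> path_image (circlepath 0 R)" shows "Yp z $$ (0,0) = Pp z"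
proof (rule lim_eq_fun[OF limp _ _ P_in])
  show "isCont Pp z" unfolding Pp_def by (intro continuous_intros)
qed (use sph[OF assms] R in auto)

lemma Q_sph: assumes "z \<in> path_image (circlepath 0 R)" shows "Yp z $$ (1,0) = Qp z"
proof (rule lim_eq_fun[OF limp _ _ Q_in])
  show "isCont Qp z" unfolding Qp_def by (intro continuous_intros)
qed (use sph[OF assms] R in auto)

lemma hol_pow: "(\<lambda>s::complex. s ^ k) holomorphic_on - {0}"
  by (intro holomorphic_intros)

lemma bnd_pow: fixes z :: complex assumes "norm z < R + 1" shows "norm (z ^ k) \<le> (R + 1) ^ k"
  unfolding norm_power using assms by (intro power_mono) auto

lemma orth1: assumes k: "k < n"
  shows "(\<Sum>i\<le>n. ca i * nu K \<rho> R (int i + int k) t) = 0"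
proof -
  have in0: "((\<lambda>s. Yp s $$ (0,1) * s ^ k) has_contour_integral 0) (circlepath 0 R)"
    by (rule inner0_e) auto
  have out: "((\<lambda>s. Ym s $$ (0,1) * s ^ k) has_contour_integral (2 * pi * \<i> * 0)) (circlepath 0 R)"
  proof (rule outer_e[OF _ _ hol_pow bnd_pow])
    fix z :: complex assume z: "norm z \<ge> r0"
    hence z0: "z \<noteq> 0" "norm z \<ge> 1" using r0 by auto
    have e: "Y z $$ (0,1) * z ^ k - 0 / z = Y z $$ (0,1) * z ^ n * z ^ k / z ^ n"
      using z0 by simp
    show "norm (Y z $$ (0,1) * z ^ k - 0 / z) \<le> C / norm z ^ 2"
      unfolding e by (rule H2[OF z0(2) as01[OF z]]) (use k in auto)
  qed auto
  have lin: "((\<lambda>z. Pp z * weight K \<rho> t z * z powi int k) has_contour_integral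
      (\<Sum>i\<le>n. ca i * nu K \<rho> R (int i + int k) t)) (circlepath 0 R)"
    unfolding Pp_def by (rule lin_comb[OF R])
  have "(\<Sum>i\<le>n. ca i * nu K \<rho> R (int i + int k) t) = 0 - 2 * pi * \<i> * 0"
  proof (rule hci_eq_unique[OF lin has_contour_integral_diff[OF in0 out]])
    fix x assume x: "x \<in> path_image (circlepath 0 R)"
    show "Pp x * weight K \<rho> t x * x powi int k = Yp x $$ (0,1) * x ^ k - Ym x $$ (0,1) * x ^ k"
      using jmpp(1,3)[OF x] P_sph[OF x] by (simp add: algebra_simps)
  qed
  thus ?thesis by simp
qed

lemma Y12_0: "2 * pi * \<i> * Y 0 $$ (0,1) = (\<Sum>i\<le>n. ca i * nu K \<rho> R (int i + (-1)) t)"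
proof -
  have in0: "((\<lambda>s. Yp s $$ (0,1) / s ^ Suc 0) has_contour_integral (2 * pi * \<i> / fact 0 * (deriv ^^ 0) (\<lambda>z. Y z $$ (0,1)) 0)) (circlepath 0 R)"
    by (rule inner_e) auto
  have out: "((\<lambda>s. Ym s $$ (0,1) * (1 / s ^ Suc 0)) has_contour_integral (2 * pi * \<i> * 0)) (circlepath 0 R)"
  proof (rule outer_e[OF _ _ hol_inv_pow bnd_inv_pow])
    fix z :: complex assume z: "norm z \<ge> r0"
    hence z0: "z \<noteq> 0" "norm z \<ge> 1" using r0 by auto
    have e: "Y z $$ (0,1) * (1 / z ^ Suc 0) - 0 / z = Y z $$ (0,1) * z ^ n * z ^ 0 / z ^ Suc n"
      using z0 by simp
    show "norm (Y z $$ (0,1) * (1 / z ^ Suc 0) - 0 / z) \<le> C / norm z ^ 2"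
      unfolding e by (rule H2[OF z0(2) as01[OF z]]) auto
  qed auto
  have lin: "((\<lambda>z. Pp z * weight K \<rho> t z * z powi (-1)) has_contour_integral
      (\<Sum>i\<le>n. ca i * nu K \<rho> R (int i + (-1)) t)) (circlepath 0 R)"
    unfolding Pp_def by (rule lin_comb[OF R])
  have "(\<Sum>i\<le>n. ca i * nu K \<rho> R (int i + (-1)) t) = 2 * pi * \<i> / fact 0 * (deriv ^^ 0) (\<lambda>z. Y z $$ (0,1)) 0 - 2 * pi * \<i> * 0"
  proof (rule hci_eq_unique[OF lin has_contour_integral_diff[OF in0 out]])
    fix x assume x: "x \<in> path_image (circlepath 0 R)"
    have "x \<noteq> 0" using sph[OF x] by blast
    thus "Pp x * weight K \<rho> t x * x powi (-1) = Yp x $$ (0,1) / x ^ Suc 0 - Ym x $$ (0,1) * (1 / x ^ Suc 0)"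
      using jmpp(1,3)[OF x] P_sph[OF x] by (simp add: field_simps power_int_minus)
  qed
  thus ?thesis by simp
qed

lemma orth2: assumes k: "k < n"
  shows "(\<Sum>i\<le>n. cd i * nu K \<rho> R (int i + int k) t) = (if k = n - 1 then - 2 * pi * \<i> else 0)"
proof -
  define c :: complex where "c = (if k = n - 1 then 1 else 0)"
  have in0: "((\<lambda>s. Yp s $$ (1,1) * s ^ k) has_contour_integral 0) (circlepath 0 R)"
    by (rule inner0_e) auto
  have out: "((\<lambda>s. Ym s $$ (1,1) * s ^ k) has_contour_integral (2 * pi * \<i> * c)) (circlepath 0 R)"
  proof (rule outer_e[OF _ _ hol_pow bnd_pow])
    fix z :: complex assume z: "norm z \<ge> r0"
    hence z0: "z \<noteq> 0" "norm z \<ge> 1" using r0 by auto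
    show "norm (Y z $$ (1,1) * z ^ k - c / z) \<le> (1 + C) / norm z ^ 2"
    proof (cases "k = n - 1")
      case True
      have e: "Y z $$ (1,1) * z ^ k - c / z = Y z $$ (1,1) * z ^ n / z - 1 / z"
        using z0 True n by (simp add: c_def power_eq_if[of z n] field_simps)
      have "norm (Y z $$ (1,1) * z ^ n / z - 1 / z) \<le> C / norm z ^ 2"
        by (rule H3[OF z0(1) as11[OF z]])
      also have "\<dots> \<le> (1 + C) / norm z ^ 2" using z0 by (intro divide_right_mono) auto
      finally show ?thesis unfolding e .
    next
      case False
      have e: "Y z $$ (1,1) * z ^ k - c / z = Y z $$ (1,1) * z ^ n * z ^ k / z ^ n"
        using z0 False by (simp add: c_def)
      show ?thesis unfolding e by (rule H1[OF z0(2) u11b[OF z]]) (use k False in auto)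
    qed
  qed auto
  have lin: "((\<lambda>z. Qp z * weight K \<rho> t z * z powi int k) has_contour_integral
      (\<Sum>i\<le>n. cd i * nu K \<rho> R (int i + int k) t)) (circlepath 0 R)"
    unfolding Qp_def by (rule lin_comb[OF R])
  have "(\<Sum>i\<le>n. cd i * nu K \<rho> R (int i + int k) t) = 0 - 2 * pi * \<i> * c"
  proof (rule hci_eq_unique[OF lin has_contour_integral_diff[OF in0 out]])
    fix x assume x: "x \<in> path_image (circlepath 0 R)"
    show "Qp x * weight K \<rho> t x * x powi int k = Yp x $$ (1,1) * x ^ k - Ym x $$ (1,1) * x ^ k"
      using jmpp(2,4)[OF x] Q_sph[OF x] by (simp add: algebra_simps)
  qed
  thus ?thesis by (simp add: c_def)
qed

lemma Y22_0: "2 * pi * \<i> * Y 0 $$ (1,1) = (\<Sum>i\<le>n. cd i * nu K \<rho> R (int i + (-1)) t)"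
proof -
  have in0: "((\<lambda>s. Yp s $$ (1,1) / s ^ Suc 0) has_contour_integral (2 * pi * \<i> / fact 0 * (deriv ^^ 0) (\<lambda>z. Y z $$ (1,1)) 0)) (circlepath 0 R)"
    by (rule inner_e) auto
  have out: "((\<lambda>s. Ym s $$ (1,1) * (1 / s ^ Suc 0)) has_contour_integral (2 * pi * \<i> * 0)) (circlepath 0 R)"
  proof (rule outer_e[OF _ _ hol_inv_pow bnd_inv_pow])
    fix z :: complex assume z: "norm z \<ge> r0"
    hence z0: "z \<noteq> 0" "norm z \<ge> 1" using r0 by auto
    have e: "Y z $$ (1,1) * (1 / z ^ Suc 0) - 0 / z = Y z $$ (1,1) * z ^ n * z ^ 0 / z ^ Suc n"
      using z0 by simp
    show "norm (Y z $$ (1,1) * (1 / z ^ Suc 0) - 0 / z) \<le> (1 + C) / norm z ^ 2"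
      unfolding e by (rule H1[OF z0(2) u11b[OF z]]) (use n in auto)
  qed auto
  have lin: "((\<lambda>z. Qp z * weight K \<rho> t z * z powi (-1)) has_contour_integral
      (\<Sum>i\<le>n. cd i * nu K \<rho> R (int i + (-1)) t)) (circlepath 0 R)"
    unfolding Qp_def by (rule lin_comb[OF R])
  have "(\<Sum>i\<le>n. cd i * nu K \<rho> R (int i + (-1)) t) = 2 * pi * \<i> / fact 0 * (deriv ^^ 0) (\<lambda>z. Y z $$ (1,1)) 0 - 2 * pi * \<i> * 0"
  proof (rule hci_eq_unique[OF lin has_contour_integral_diff[OF in0 out]])
    fix x assume x: "x \<in> path_image (circlepath 0 R)"
    have "x \<noteq> 0" using sph[OF x] by blast
    thus "Qp x * weight K \<rho> t x * x powi (-1) = Yp x $$ (1,1) / x ^ Suc 0 - Ym x $$ (1,1) * (1 / x ^ Suc 0)"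
      using jmpp(2,4)[OF x] Q_sph[OF x] by (simp add: field_simps power_int_minus)
  qed
  thus ?thesis by simp
qed

end

lemma norm3: "norm (a + b - c :: complex) \<le> norm a + norm b + norm c"
  using norm_triangle_ineq4[of "a + b" c] norm_triangle_ineq[of a b] by linarith

context rhp begin

definition "DD z = Y z $$ (0,0) * Y z $$ (1,1) - Y z $$ (0,1) * Y z $$ (1,0)"
definition "DDp z = Yp z $$ (0,0) * Yp z $$ (1,1) - Yp z $$ (0,1) * Yp z $$ (1,0)"
definition "DDm z = Ym z $$ (0,0) * Ym z $$ (1,1) - Ym z $$ (0,1) * Ym z $$ (1,0)"

lemma DD_hin: "DD holomorphic_on ball 0 R"
  unfolding DD_def[abs_def] by (intro holomorphic_intros hin) auto
lemma DD_hout: "DD holomorphic_on - cball 0 R"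
  unfolding DD_def[abs_def] by (intro holomorphic_intros hout) auto

lemma DD_bnd: assumes "norm z < R + 1" "norm z \<noteq> R" shows "norm (DD z) \<le> B * B + B * B"
proof -
  have b: "norm (Y z $$ (i,j)) \<le> B" if "i < 2" "j < 2" for i j using bnd[OF that assms] .
  have "norm (DD z) \<le> norm (Y z $$ (0,0) * Y z $$ (1,1)) + norm (Y z $$ (0,1) * Y z $$ (1,0))"
    unfolding DD_def by (rule norm_triangle_ineq4)
  also have "\<dots> \<le> B * B + B * B" unfolding norm_mult
    by (intro add_mono mult_mono b B0) auto
  finally show ?thesis .
qed

lemma DD_as: assumes z: "norm z \<ge> r0"
  shows "norm (DD z - 1) \<le> (C * (1 + C) + C + C * C) / norm z"
proof -
  have z0: "z \<noteq> 0" "norm z > 0" using z r0 by auto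
  define u0 where "u0 = Y z $$ (0,0) / z ^ n"
  define u1 where "u1 = Y z $$ (1,1) * z ^ n"
  define v0 where "v0 = Y z $$ (0,1) * z ^ n"
  define v1 where "v1 = Y z $$ (1,0) / z ^ n"
  have e: "DD z - 1 = (u0 - 1) * u1 + (u1 - 1) - v0 * v1"
    unfolding DD_def u0_def u1_def v0_def v1_def using z0 by (simp add: field_simps)
  have "norm (DD z - 1) \<le> norm ((u0 - 1) * u1) + norm (u1 - 1) + norm (v0 * v1)"
    unfolding e by (rule norm3)
  also have "\<dots> \<le> (C / norm z) * (1 + C) + C / norm z + (C / norm z) * C"
    unfolding norm_mult
  proof (intro add_mono mult_mono)
    show "norm (u0 - 1) \<le> C / norm z" unfolding u0_def by (rule as00[OF z])
    show "norm u1 \<le> 1 + C" unfolding u1_def by (rule u11b[OF z])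
    show "norm (u1 - 1) \<le> C / norm z" unfolding u1_def by (rule as11[OF z])
    show "norm v0 \<le> C / norm z" unfolding v0_def by (rule as01[OF z])
    show "norm v1 \<le> C" unfolding v1_def by (rule order_trans[OF as10[OF z] Cz[OF z]])
  qed (use C0 z0 in auto)
  also have "\<dots> = (C * (1 + C) + C + C * C) / norm z" using z0 by (simp add: field_simps)
  finally show ?thesis .
qed

lemma DD_jump: "z \<in> path_image (circlepath 0 R) \<Longrightarrow> DDp z = DDm z"
  unfolding DDp_def DDm_def using jmpp[of z] by (simp add: algebra_simps)

lemma DD_in: "((\<lambda>s. DDp s / s ^ Suc m) has_contour_integral (2 * pi * \<i> / fact m * (deriv ^^ m) DD 0)) (circlepath 0 R)"
proof (rule inner_int[OF DD_hin, where B="B * B + B * B"])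
  show "R > 0" using R by simp
  fix z :: complex assume "z \<in> ball 0 R" thus "norm (DD z) \<le> B * B + B * B" by (intro DD_bnd) auto
next
  fix z :: complex assume z: "z \<in> sphere 0 R"
  show "(DD \<longlongrightarrow> DDp z) (at z within ball 0 R)"
    unfolding DD_def[abs_def] DDp_def by (intro tendsto_intros limp z) auto
qed

lemma DD_out:
  assumes dec: "\<And>z. norm z \<ge> r0 \<Longrightarrow> norm (DD z * (1 / z ^ Suc m) - c / z) \<le> M / norm z ^ 2"
  shows "((\<lambda>s. DDm s * (1 / s ^ Suc m)) has_contour_integral (2 * pi * \<i> * c)) (circlepath 0 R)"
proof (rule outer_int[where B="(B * B + B * B) * (1 / R ^ Suc m)"])
  show "(\<lambda>s. DD s * (1 / s ^ Suc m)) holomorphic_on - cball 0 R"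
    by (intro holomorphic_intros DD_hout) (use R in auto)
  show "R > 0" using R by simp
  fix z :: complex assume z: "R < norm z" "norm z < R + 1"
  show "norm (DD z * (1 / z ^ Suc m)) \<le> (B * B + B * B) * (1 / R ^ Suc m)"
    unfolding norm_mult using DD_bnd[of z] bnd_inv_pow[OF z(1), of "Suc m"] z B0
    by (intro mult_mono) auto
next
  fix z :: complex assume z: "z \<in> sphere 0 R"
  hence "z \<noteq> 0" using R by auto
  show "((\<lambda>s. DD s * (1 / s ^ Suc m)) \<longlongrightarrow> DDm z * (1 / z ^ Suc m)) (at z within - cball 0 R)"
    unfolding DD_def[abs_def] DDm_def using \<open>z \<noteq> 0\<close> by (intro tendsto_intros limm z) auto
qed (fact dec)

lemma DD0: "DD 0 = 1"
proof -
  define M where "M = C * (1 + C) + C + C * C"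
  have o: "((\<lambda>s. DDm s * (1 / s ^ Suc 0)) has_contour_integral (2 * pi * \<i> * 1)) (circlepath 0 R)"
  proof (rule DD_out)
    fix z :: complex assume z: "norm z \<ge> r0"
    hence z0: "z \<noteq> 0" using r0 by auto
    have e: "DD z * (1 / z ^ Suc 0) = DD z / z" by simp
    show "norm (DD z * (1 / z ^ Suc 0) - 1 / z) \<le> M / norm z ^ 2"
      unfolding e M_def by (rule H3[OF z0 DD_as[OF z]])
  qed
  have "2 * pi * \<i> / fact 0 * (deriv ^^ 0) DD 0 = 2 * pi * \<i> * 1"
  proof (rule hci_eq_unique[OF DD_in o])
    fix x assume x: "x \<in> path_image (circlepath 0 R)"
    show "DDp x / x ^ Suc 0 = DDm x * (1 / x ^ Suc 0)" using DD_jump[OF x] by simp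
  qed
  thus ?thesis by simp
qed

lemma DD'0: "deriv DD 0 = 0"
proof -
  define M where "M = C * (1 + C) + C + C * C"
  have o: "((\<lambda>s. DDm s * (1 / s ^ Suc 1)) has_contour_integral (2 * pi * \<i> * 0)) (circlepath 0 R)"
  proof (rule DD_out)
    fix z :: complex assume z: "norm z \<ge> r0"
    hence z0: "z \<noteq> 0" "norm z \<ge> 1" using r0 by auto
    have e: "DD z * (1 / z ^ Suc 1) - 0 / z = DD z * z ^ 0 / z ^ 2" by (simp add: power2_eq_square)
    have M0: "M \<ge> 0" unfolding M_def using C0 by simp
    have "M / norm z \<le> M / 1" using z0 M0 by (intro divide_left_mono) auto
    hence "norm (DD z - 1) \<le> M" using DD_as[OF z, folded M_def] by simp
    show "norm (DD z * (1 / z ^ Suc 1) - 0 / z) \<le> (1 + M) / norm z ^ 2"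
      unfolding e by (rule H1[OF z0(2) bnd1]) (use \<open>norm (DD z - 1) \<le> M\<close> in auto)
  qed
  have "2 * pi * \<i> / fact 1 * (deriv ^^ 1) DD 0 = 2 * pi * \<i> * 0"
  proof (rule hci_eq_unique[OF DD_in o])
    fix x assume x: "x \<in> path_image (circlepath 0 R)"
    show "DDp x / x ^ Suc 1 = DDm x * (1 / x ^ Suc 1)" using DD_jump[OF x] by simp
  qed
  thus ?thesis by simp
qed

lemma deriv_DD: "deriv DD 0 = deriv (\<lambda>z. Y z $$ (0,0)) 0 * Y 0 $$ (1,1) + Y 0 $$ (0,0) * deriv (\<lambda>z. Y z $$ (1,1)) 0
   - (deriv (\<lambda>z. Y z $$ (0,1)) 0 * Y 0 $$ (1,0) + Y 0 $$ (0,1) * deriv (\<lambda>z. Y z $$ (1,0)) 0)"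
proof -
  have d: "((\<lambda>z. Y z $$ (i,j)) has_field_derivative deriv (\<lambda>z. Y z $$ (i,j)) 0) (at 0)" if "i < 2" "j < 2" for i j
    by (rule holomorphic_derivI[OF hin[OF that]]) (use R in auto)
  have "(DD has_field_derivative (deriv (\<lambda>z. Y z $$ (0,0)) 0 * Y 0 $$ (1,1) + deriv (\<lambda>z. Y z $$ (1,1)) 0 * Y 0 $$ (0,0)
   - (deriv (\<lambda>z. Y z $$ (0,1)) 0 * Y 0 $$ (1,0) + deriv (\<lambda>z. Y z $$ (1,0)) 0 * Y 0 $$ (0,1)))) (at 0)"
    unfolding DD_def[abs_def] by (intro DERIV_diff DERIV_mult d) auto
  hence "deriv DD 0 = deriv (\<lambda>z. Y z $$ (0,0)) 0 * Y 0 $$ (1,1) + deriv (\<lambda>z. Y z $$ (1,1)) 0 * Y 0 $$ (0,0)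
   - (deriv (\<lambda>z. Y z $$ (0,1)) 0 * Y 0 $$ (1,0) + deriv (\<lambda>z. Y z $$ (1,0)) 0 * Y 0 $$ (0,1))"
    by (rule DERIV_imp_deriv)
  thus ?thesis by (simp add: algebra_simps)
qed

end

lemma final_alg:
  fixes N :: "int \<Rightarrow> complex" and a d :: "nat \<Rightarrow> complex" and n :: nat and y12 y22 :: complex
  assumes n: "n \<ge> 1"
   and O1: "\<And>k. k < n \<Longrightarrow> (\<Sum>i\<le>n. a i * N (int i + int k)) = 0"
   and O2: "\<And>k. k < n \<Longrightarrow> (\<Sum>i\<le>n. d i * N (int i + int k)) = (if k = n - 1 then - 2 * pi * \<i> else 0)"
   and Z1: "2 * pi * \<i> * y12 = (\<Sum>i\<le>n. a i * N (int i + (-1)))"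
   and Z2: "2 * pi * \<i> * y22 = (\<Sum>i\<le>n. d i * N (int i + (-1)))"
   and D: "a 0 * y22 - y12 * d 0 = 1"
  shows "det (mat n n (\<lambda>(i,j). if j = 0 then N (int i - 1) else N (int (i + j))))
     = - (y22 * a 1 - y12 * d 1) * det (mat n n (\<lambda>(i,j). N (int (i + j))))"
proof -
  define Sa where "Sa m = (\<Sum>i\<le>n. a i * N (int i + m))" for m
  define Sd where "Sd m = (\<Sum>i\<le>n. d i * N (int i + m))" for m
  have O1': "Sa (int k) = 0" if "k < n" for k using O1[OF that] unfolding Sa_def .
  have O2': "Sd (int k) = 0" if "k < n - 1" for k using O2[of k] that unfolding Sd_def by auto
  have pi0: "2 * pi * \<i> \<noteq> (0::complex)" by simp
  have swap: "(\<Sum>j\<le>n. d j * Sa (int j - 2)) = (\<Sum>i\<le>n. a i * Sd (int i - 2))"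
  proof -
    have "(\<Sum>j\<le>n. d j * Sa (int j - 2)) = (\<Sum>j\<le>n. \<Sum>i\<le>n. a i * d j * N (int i + int j - 2))"
      unfolding Sa_def by (simp add: sum_distrib_left algebra_simps)
    also have "\<dots> = (\<Sum>i\<le>n. \<Sum>j\<le>n. a i * d j * N (int i + int j - 2))" by (rule sum.swap)
    also have "\<dots> = (\<Sum>i\<le>n. a i * Sd (int i - 2))"
      unfolding Sd_def by (simp add: sum_distrib_left algebra_simps)
    finally show ?thesis .
  qed
  obtain m where m: "n = Suc m" using n by (cases n) auto
  have split: "(\<Sum>j\<le>n. g j) = g 0 + g 1 + (\<Sum>j<m. g (Suc (Suc j)))" for g :: "nat \<Rightarrow> complex"
    unfolding m by (simp only: sum.atMost_shift sum.lessThan_Suc_shift) (simp add: add.assoc)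
  have G: "d 0 * Sa (-2) + d 1 * Sa (-1) = a 0 * Sd (-2) + a 1 * Sd (-1)"
  proof -
    have "(\<Sum>j\<le>n. d j * Sa (int j - 2)) = d 0 * Sa (-2) + d 1 * Sa (-1)"
    proof -
      have z: "(\<Sum>j<m. d (Suc (Suc j)) * Sa (int (Suc (Suc j)) - 2)) = 0"
        by (rule sum.neutral) (use O1' m in auto)
      show ?thesis unfolding split z by simp
    qed
    moreover have "(\<Sum>i\<le>n. a i * Sd (int i - 2)) = a 0 * Sd (-2) + a 1 * Sd (-1)"
    proof -
      have z: "(\<Sum>j<m. a (Suc (Suc j)) * Sd (int (Suc (Suc j)) - 2)) = 0"
        by (rule sum.neutral) (use O2' m in auto)
      show ?thesis unfolding split z by simp
    qed
    ultimately show ?thesis using swap by simp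
  qed
  define f where "f j = a (Suc j) * d 0 - d (Suc j) * a 0" for j
  have shiftA: "(\<Sum>j<n. a (Suc j) * N (int j + q)) = Sa (q - 1) - a 0 * N (q - 1)" for q
    unfolding Sa_def by (subst sum.atMost_shift) (simp add: algebra_simps)
  have shiftD: "(\<Sum>j<n. d (Suc j) * N (int j + q)) = Sd (q - 1) - d 0 * N (q - 1)" for q
    unfolding Sd_def by (subst sum.atMost_shift) (simp add: algebra_simps)
  have fsum: "(\<Sum>j<n. f j * N (int j + q)) = d 0 * Sa (q - 1) - a 0 * Sd (q - 1)" for q
  proof -
    have "(\<Sum>j<n. f j * N (int j + q)) = d 0 * (\<Sum>j<n. a (Suc j) * N (int j + q)) - a 0 * (\<Sum>j<n. d (Suc j) * N (int j + q))"
      unfolding f_def by (simp add: sum_distrib_left sum_subtractf algebra_simps)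
    also have "\<dots> = d 0 * Sa (q - 1) - a 0 * Sd (q - 1)" unfolding shiftA shiftD by (simp add: algebra_simps)
    finally show ?thesis .
  qed
  have HF: "(\<Sum>j<n. f j * N (int j + int k)) = (if k = 0 then - 2 * pi * \<i> else 0)" if k: "k < n" for k
  proof (cases "k = 0")
    case True
    have "Sa (-1) = 2 * pi * \<i> * y12" unfolding Sa_def Z1 by simp
    moreover have "Sd (-1) = 2 * pi * \<i> * y22" unfolding Sd_def Z2 by simp
    ultimately have "(\<Sum>j<n. f j * N (int j + int k)) = 2 * pi * \<i> * (d 0 * y12 - a 0 * y22)"
      using fsum[of 0] True by (simp add: algebra_simps)
    also have "\<dots> = - 2 * pi * \<i>" using D by (simp add: algebra_simps)
    finally show ?thesis using True by simp
  next
    case False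
    then obtain k' where k': "k = Suc k'" by (cases k) auto
    have "Sa (int k - 1) = 0" using O1'[of k'] k k' by simp
    moreover have "Sd (int k - 1) = 0" using O2'[of k'] k k' by simp
    ultimately show ?thesis using fsum[of "int k"] False by simp
  qed
  define H where "H = mat n n (\<lambda>(i,j). N (int (i + j)))"
  define M0 where "M0 = mat n n (\<lambda>(i,j). if j = 0 then N (int i - 1) else N (int (i + j)))"
  have Hc: "H \<in> carrier_mat n n" unfolding H_def by simp
  have M0c: "M0 \<in> carrier_mat n n" unfolding M0_def by simp
  have n0: "0 < n" using n by simp
  have cof: "det H * f j = - 2 * pi * \<i> * cofactor H j 0" if j: "j < n" for j
  proof -
    have Had: "H * adj_mat H = det H \<cdot>\<^sub>m 1\<^sub>m n" using adj_mat(2)[OF Hc] .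
    have ent: "(\<Sum>k<n. N (int i + int k) * cofactor H j k) = (if i = j then det H else 0)" if i: "i < n" for i
    proof -
      have "(H * adj_mat H) $$ (i, j) = (\<Sum>k<n. N (int i + int k) * cofactor H j k)"
        using i j adj_mat(1)[OF Hc] Hc
        by (auto simp: H_def adj_mat_def scalar_prod_def Matrix.row_def Matrix.col_def
            lessThan_atLeast0 intro!: sum.cong)
      thus ?thesis using Had i j by (simp split: if_splits)
    qed
    have "(\<Sum>i<n. f i * (\<Sum>k<n. N (int i + int k) * cofactor H j k)) = f j * det H"
      using j by (simp add: ent if_distrib cong: if_cong)
    moreover have "(\<Sum>i<n. f i * (\<Sum>k<n. N (int i + int k) * cofactor H j k))
        = (\<Sum>k<n. (\<Sum>i<n. f i * N (int i + int k)) * cofactor H j k)"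
    proof -
      have "(\<Sum>i<n. f i * (\<Sum>k<n. N (int i + int k) * cofactor H j k))
          = (\<Sum>i<n. \<Sum>k<n. f i * N (int i + int k) * cofactor H j k)"
        by (simp only: sum_distrib_left mult.assoc)
      also have "\<dots> = (\<Sum>k<n. \<Sum>i<n. f i * N (int i + int k) * cofactor H j k)"
        by (rule sum.swap)
      also have "\<dots> = (\<Sum>k<n. (\<Sum>i<n. f i * N (int i + int k)) * cofactor H j k)"
        by (simp only: sum_distrib_right)
      finally show ?thesis .
    qed
    moreover have "\<dots> = (\<Sum>k<n. (if k = 0 then - 2 * pi * \<i> else 0) * cofactor H j k)"
      by (rule sum.cong) (auto simp: HF)
    moreover have "\<dots> = (\<Sum>k<n. if k = 0 then - 2 * pi * \<i> * cofactor H j 0 else 0)"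
      by (rule sum.cong) auto
    moreover have "\<dots> = - 2 * pi * \<i> * cofactor H j 0"
      using n0 by (subst sum.delta) auto
    ultimately show ?thesis by (simp add: mult.commute)
  qed
  have cofM: "cofactor M0 i 0 = cofactor H i 0" if "i < n" for i
  proof -
    have "mat_delete M0 i 0 = mat_delete H i 0"
      by (rule eq_matI) (auto simp: mat_delete_def M0_def H_def ac_simps)
    thus ?thesis unfolding cofactor_def by simp
  qed
  have "det M0 = (\<Sum>i<n. M0 $$ (i, 0) * cofactor M0 i 0)"
    by (rule laplace_expansion_column[OF M0c n0])
  also have "\<dots> = (\<Sum>i<n. N (int i - 1) * cofactor H i 0)"
  proof (rule sum.cong[OF refl])
    fix i assume "i \<in> {..<n}"
    hence i: "i < n" by simp
    have "M0 $$ (i, 0) = N (int i - 1)" using i n0 by (simp add: M0_def)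
    thus "M0 $$ (i, 0) * cofactor M0 i 0 = N (int i - 1) * cofactor H i 0" using cofM[OF i] by simp
  qed
  finally have dM: "det M0 = (\<Sum>i<n. N (int i - 1) * cofactor H i 0)" .
  have "- 2 * pi * \<i> * det M0 = (\<Sum>i<n. N (int i - 1) * (- 2 * pi * \<i> * cofactor H i 0))"
    unfolding dM by (simp add: sum_distrib_left mult_ac)
  also have "\<dots> = (\<Sum>i<n. N (int i - 1) * (det H * f i))"
    by (rule sum.cong) (auto simp: cof)
  also have "\<dots> = det H * (\<Sum>i<n. f i * N (int i + (-1)))"
    by (simp add: sum_distrib_left mult_ac)
  also have "(\<Sum>i<n. f i * N (int i + (-1))) = d 0 * Sa (-2) - a 0 * Sd (-2)"
    using fsum[of "-1"] by simp
  also have "\<dots> = a 1 * Sd (-1) - d 1 * Sa (-1)" using G by (simp add: algebra_simps)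
  also have "\<dots> = 2 * pi * \<i> * (y22 * a 1 - y12 * d 1)"
    unfolding Sa_def Sd_def Z1[symmetric] Z2[symmetric] by (simp add: algebra_simps)
  finally have "- 2 * pi * \<i> * det M0 = det H * (2 * pi * \<i> * (y22 * a 1 - y12 * d 1))" .
  hence "2 * pi * \<i> * (det M0 + (y22 * a 1 - y12 * d 1) * det H) = 0"
    by (simp add: algebra_simps)
  hence "det M0 + (y22 * a 1 - y12 * d 1) * det H = 0" using pi0 by simp
  hence "det M0 = - ((y22 * a 1 - y12 * d 1) * det H)" by (rule add_eq_0_iff2[THEN iffD1])
  hence "det M0 = - (y22 * a 1 - y12 * d 1) * det H" by (simp only: minus_mult_left)
  thus ?thesis unfolding M0_def H_def .
qed

lemma tau_nu: "tau K \<rho> R n = (\<lambda>t. det (mat n n (\<lambda>(i,j). nu K \<rho> R (int (i + j)) t)))"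
  unfolding tau_def[abs_def] by (simp add: mu_nu[abs_def] case_prod_beta)

lemma tau_deriv:
  assumes R: "R > 1" and n: "n \<ge> 1"
  shows "deriv (tau K \<rho> R n) t = det (mat n n (\<lambda>(i,j). if j = 0 then nu K \<rho> R (int i - 1) t else nu K \<rho> R (int (i + j)) t))"
proof -
  define G where "G b = det (mat n n (\<lambda>(i,j). if j = b then nu K \<rho> R (int (i + j) - 1) t else nu K \<rho> R (int (i + j)) t))" for b
  have d: "(tau K \<rho> R n has_field_derivative (\<Sum>b<n. G b)) (at t)"
    unfolding tau_nu G_def by (rule det_deriv) (rule nu_deriv[OF R])
  obtain m where m: "n = Suc m" using n by (cases n) auto
  have G0: "G (Suc b) = 0" if "b < m" for b
    unfolding G_def
  proof (rule det_identical_columns[of _ n "Suc b" b])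
    show "col (mat n n (\<lambda>(i,j). if j = Suc b then nu K \<rho> R (int (i + j) - 1) t else nu K \<rho> R (int (i + j)) t)) (Suc b) =
      col (mat n n (\<lambda>(i,j). if j = Suc b then nu K \<rho> R (int (i + j) - 1) t else nu K \<rho> R (int (i + j)) t)) b"
      using that m by (intro eq_vecI) auto
  qed (use that m in auto)
  have "(\<Sum>b<n. G b) = G 0" unfolding m by (simp only: sum.lessThan_Suc_shift) (simp add: G0)
  also have "G 0 = det (mat n n (\<lambda>(i,j). if j = 0 then nu K \<rho> R (int i - 1) t else nu K \<rho> R (int (i + j)) t))"
    unfolding G_def by (intro arg_cong[where f=det] eq_matI) auto
  finally show ?thesis using DERIV_imp_deriv[OF d] by simp
qed

theorem mainTheorem1:
  fixes n :: nat and K :: int and \<rho> :: complex and R :: real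
  assumes "n \<ge> 1" and "R > 1"
  shows "(\<exists>p :: complex poly. \<forall>t. tau K \<rho> R n t = poly p t) \<and>
    (\<forall>t Y. tau K \<rho> R n t \<noteq> 0 \<longrightarrow> RHP_solution K \<rho> R n t Y \<longrightarrow>
       (\<forall>Y0i \<in> carrier_mat 2 2. Y0i * Y 0 = 1\<^sub>m 2 \<longrightarrow>
          (let M = Y0i * mat 2 2 (\<lambda>(i, j). deriv (\<lambda>z. Y z $$ (i, j)) 0) in
             - (1/2) * mat_trace (M * sigma3) + \<rho> / 2 = - (M $$ (0, 0)) + \<rho> / 2 \<and>
             - (M $$ (0, 0)) + \<rho> / 2 = deriv (tau K \<rho> R n) t / tau K \<rho> R n t + \<rho> / 2)))"
proof (intro conjI allI impI ballI)
  note n = assms(1) and R = assms(2)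
  show "\<exists>p :: complex poly. \<forall>t. tau K \<rho> R n t = poly p t" by (rule tau_poly[OF R])
  fix t Y Y0i
  assume tau0: "tau K \<rho> R n t \<noteq> 0" and RHP: "RHP_solution K \<rho> R n t Y"
    and Y0i: "Y0i \<in> carrier_mat 2 2" and inv: "Y0i * Y 0 = 1\<^sub>m 2"
  obtain Yp Ym B C r0 where L: "rhp K \<rho> R n t Y Yp Ym B C r0" using rhp_intro[OF RHP R n] by blast
  interpret rhp K \<rho> R n t Y Yp Ym B C r0 by (rule L)
  define A where "A = Y 0"
  have Ac: "A \<in> carrier_mat 2 2" unfolding A_def by (rule car)
  define dY where "dY = mat 2 2 (\<lambda>(i, j). deriv (\<lambda>z. Y z $$ (i, j)) 0)"
  have dYc: "dY \<in> carrier_mat 2 2" unfolding dY_def by simp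
  define Ad where "Ad = mat 2 2 (\<lambda>(i,j). if i = 0 then (if j = 0 then A $$ (1,1) else - A $$ (0,1))
      else (if j = 0 then - A $$ (1,0) else A $$ (0,0)))"
  have Adc: "Ad \<in> carrier_mat 2 2" unfolding Ad_def by simp
  have D1: "A $$ (0,0) * A $$ (1,1) - A $$ (0,1) * A $$ (1,0) = 1"
    using DD0 unfolding DD_def A_def by simp
  have AAd: "A * Ad = 1\<^sub>m 2"
  proof (rule eq_matI)
    fix i j assume ij: "i < dim_row (1\<^sub>m 2)" "j < dim_col (1\<^sub>m 2)"
    hence ij': "i < 2" "j < 2" by auto
    show "(A * Ad) $$ (i, j) = 1\<^sub>m 2 $$ (i, j)"
      unfolding mult22[OF Ac Adc ij'] using ij' D1
      by (auto simp: Ad_def less_2_cases_iff algebra_simps)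
  qed (use Ac Adc in auto)
  have Y0iAd: "Y0i = Ad"
  proof -
    have "Y0i = Y0i * (A * Ad)" unfolding AAd using Y0i by simp
    also have "\<dots> = (Y0i * A) * Ad" using Y0i Ac Adc by (simp add: assoc_mult_mat)
    also have "\<dots> = Ad" using inv Adc unfolding A_def by simp
    finally show ?thesis .
  qed
  define M where "M = Y0i * dY"
  have Mc: "M \<in> carrier_mat 2 2" unfolding M_def using Y0i dYc by simp
  have M00: "M $$ (0,0) = A $$ (1,1) * deriv (\<lambda>z. Y z $$ (0,0)) 0 - A $$ (0,1) * deriv (\<lambda>z. Y z $$ (1,0)) 0"
    unfolding M_def Y0iAd by (subst mult22[OF Adc dYc]) (simp_all add: Ad_def dY_def)
  have M11: "M $$ (1,1) = - A $$ (1,0) * deriv (\<lambda>z. Y z $$ (0,1)) 0 + A $$ (0,0) * deriv (\<lambda>z. Y z $$ (1,1)) 0"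
    unfolding M_def Y0iAd by (subst mult22[OF Adc dYc]) (simp_all add: Ad_def dY_def)
  have s3: "sigma3 \<in> carrier_mat 2 2" unfolding sigma3_def by simp
  have tr: "mat_trace (M * sigma3) = M $$ (0,0) - M $$ (1,1)"
  proof -
    have e0: "(M * sigma3) $$ (0,0) = M $$ (0,0)" by (subst mult22[OF Mc s3]) (simp_all add: sigma3_def)
    have e1: "(M * sigma3) $$ (1,1) = - M $$ (1,1)" by (subst mult22[OF Mc s3]) (simp_all add: sigma3_def)
    have "mat_trace (M * sigma3) = (M * sigma3) $$ (0,0) + (M * sigma3) $$ (1,1)"
      unfolding mat_trace_def using Mc s3 by (simp add: numeral_2_eq_2)
    thus ?thesis unfolding e0 e1 by simp
  qed
  have trace0: "M $$ (0,0) + M $$ (1,1) = 0"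
    using DD'0 unfolding deriv_DD M00 M11 A_def by (simp add: algebra_simps)
  have ca0: "ca 0 = A $$ (0,0)" unfolding ca_def A_def by simp
  have cd0: "cd 0 = A $$ (1,0)" unfolding cd_def A_def by simp
  have ca1: "ca 1 = deriv (\<lambda>z. Y z $$ (0,0)) 0" unfolding ca_def by simp
  have cd1: "cd 1 = deriv (\<lambda>z. Y z $$ (1,0)) 0" unfolding cd_def by simp
  have fa: "det (mat n n (\<lambda>(i,j). if j = 0 then nu K \<rho> R (int i - 1) t else nu K \<rho> R (int (i + j)) t))
     = - (A $$ (1,1) * ca 1 - A $$ (0,1) * cd 1) * det (mat n n (\<lambda>(i,j). nu K \<rho> R (int (i + j)) t))"
  proof (rule final_alg[OF n])
    show "\<And>k. k < n \<Longrightarrow> (\<Sum>i\<le>n. ca i * nu K \<rho> R (int i + int k) t) = 0" by (rule orth1)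
    show "\<And>k. k < n \<Longrightarrow> (\<Sum>i\<le>n. cd i * nu K \<rho> R (int i + int k) t) = (if k = n - 1 then - 2 * pi * \<i> else 0)"
      by (rule orth2)
    show "2 * pi * \<i> * A $$ (0,1) = (\<Sum>i\<le>n. ca i * nu K \<rho> R (int i + (-1)) t)" unfolding A_def by (rule Y12_0)
    show "2 * pi * \<i> * A $$ (1,1) = (\<Sum>i\<le>n. cd i * nu K \<rho> R (int i + (-1)) t)" unfolding A_def by (rule Y22_0)
    show "ca 0 * A $$ (1,1) - A $$ (0,1) * cd 0 = 1" unfolding ca0 cd0 using D1 by (simp add: algebra_simps)
  qed
  have tauH: "tau K \<rho> R n t = det (mat n n (\<lambda>(i,j). nu K \<rho> R (int (i + j)) t))"
    by (simp add: tau_nu)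
  have "deriv (tau K \<rho> R n) t = - M $$ (0,0) * tau K \<rho> R n t"
    unfolding tau_deriv[OF R n] fa tauH M00 ca1 cd1 by simp
  hence dt: "deriv (tau K \<rho> R n) t / tau K \<rho> R n t = - M $$ (0,0)" using tau0 by simp
  show "let M = Y0i * mat 2 2 (\<lambda>(i, j). deriv (\<lambda>z. Y z $$ (i, j)) 0) in
             - (1/2) * mat_trace (M * sigma3) + \<rho> / 2 = - (M $$ (0, 0)) + \<rho> / 2 \<and>
             - (M $$ (0, 0)) + \<rho> / 2 = deriv (tau K \<rho> R n) t / tau K \<rho> R n t + \<rho> / 2"
    unfolding Let_def dY_def[symmetric] M_def[symmetric]
  proof
    have "M $$ (1,1) = - M $$ (0,0)" using trace0 by (simp add: eq_neg_iff_add_eq_0 add.commute)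
    thus "- (1/2) * mat_trace (M * sigma3) + \<rho> / 2 = - (M $$ (0, 0)) + \<rho> / 2"
      unfolding tr by simp
    show "- (M $$ (0, 0)) + \<rho> / 2 = deriv (tau K \<rho> R n) t / tau K \<rho> R n t + \<rho> / 2"
      using dt by simp
  qed
qed

end
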